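(* Let $k$ be an algebraically closed field, $G$ a connected linear algebraic group over $k$, and $V$ an $n$-dimensional algebraic $G$-module with basis $e_1,\ldots,e_n$ and dual basis $z_1,\ldots,z_n$ of $V^*$; identify $V$ with $\mathbb A^n$ via $\sum\gamma_ie_i\mapsto(\gamma_1,\ldots,\gamma_n)$. Let $\rho_{p,q}$ ($1\le p,q\le n$) be the regular functions on $G$ with $g\cdot\bigl(\sum_q\gamma_qe_q\bigr)=\sum_p\bigl(\sum_q\rho_{p,q}(g)\gamma_q\bigr)e_p$. Fix $r,s\in\mathbb N$ and a dominant morphism $\iota\colon\mathbb A^{r,s}\to G$. Let $L$ be an affine linear subvariety of $V$ and $\tau\colon\mathbb A^l\to V$ a morphism whose image is dense in $L$. Let $x_1,\ldots,x_{r+s},y_1,\ldots,y_l$ be the standard coordinates on $\mathbb A^{r+s+l}\supset\mathbb A^{r,s}\times\mathbb A^l$, and set $$f_p:=\sum_{q=1}^n\iota^*(\rho_{p,q})\,\tau^*(z_q)\in k[x_1,\ldots,x_{r+s},x_1^{-1},\ldots,x_r^{-1},y_1,\ldots,y_l],\quad 1\le p\le n,$$ written as $f_p=g_p/h_p$ with $g_p\in k[x_1,\ldots,x_{r+s},y_1,\ldots,y_l]$ and $h_p\in k[x_1,\ldots,x_r]$. In the polynomial ring $k[t,x_1,\ldots,x_{r+s},y_1,\ldots,y_l,z_1,\ldots,z_n]$ ($t$ a new variable), let $\mathcal G$ be a Gröbner basis of the ideal generated by $h_1z_1-g_1,\ldots,h_nz_n-g_n,\,1-h_1\cdots h_nt$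 with respect to a monomial order in which every variable $t,x_i,y_j$ is bigger than every variable $z_p$ (an elimination order for $t,x_1,\ldots,x_{r+s},y_1,\ldots,y_l$, e.g. a lexicographic one). Let $q_1,\ldots,q_m$ be all elements of $\mathcal G$ lying in $k[z_1,\ldots,z_n]$. Then $$\overline{G\cdot L}=\{v\in\mathbb A^n\mid q_1(v)=\cdots=q_m(v)=0\},$$ where the bar denotes Zariski closure in $V=\mathbb A^n$.
   Context: $\mathbb N$ is the set of nonnegative integers; $\mathbb A^{r,s}:=\{(\varepsilon_1,\ldots,\varepsilon_{r+s})\in\mathbb A^{r+s}\mid\varepsilon_1\cdots\varepsilon_r\neq0\}$, identified with an open subset of $\mathbb A^{r+s}$; $\iota^*(\rho_{p,q})\in k[x_1,\ldots,x_{r+s},x_1^{-1},\ldots,x_r^{-1}]$ and $\tau^*(z_q)\in k[y_1,\ldots,y_l]$. $G\cdot L=\{g\cdot v\mid g\in G,\ v\in L\}$. *)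

theory Defs
  imports "Jordan_Normal_Form.Determinant" "HOL-Library.Poly_Mapping"
begin

definition alg_closed :: "'k::field itself \<Rightarrow> bool" where
  "alg_closed _ \<longleftrightarrow> (\<forall>p :: 'k poly. degree p > 0 \<longrightarrow> (\<exists>x. poly p x = 0))"

type_synonym 'k mpoly = "(nat \<Rightarrow>\<^sub>0 nat) \<Rightarrow>\<^sub>0 'k"

definition mpeval :: "'k::comm_ring_1 mpoly \<Rightarrow> (nat \<Rightarrow> 'k) \<Rightarrow> 'k" where
  "mpeval p a = (\<Sum>m\<in>Poly_Mapping.keys p. Poly_Mapping.lookup p m * (\<Prod>i\<in>Poly_Mapping.keys m. a i ^ Poly_Mapping.lookup m i))"

definition mvars :: "'k::zero mpoly \<Rightarrow> nat set" where
  "mvars p = \<Union> (Poly_Mapping.keys ` Poly_Mapping.keys p)"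

definition Var :: "nat \<Rightarrow> 'k::{zero,one} mpoly" where
  "Var i = Poly_Mapping.single (Poly_Mapping.single i 1) 1"

definition ideal_gen :: "'k::comm_ring_1 mpoly set \<Rightarrow> 'k mpoly set" where
  "ideal_gen F = {p. \<exists>S c. finite S \<and> S \<subseteq> F \<and> p = (\<Sum>f\<in>S. c f * f)}"

definition monomial_order :: "((nat \<Rightarrow>\<^sub>0 nat) \<Rightarrow> (nat \<Rightarrow>\<^sub>0 nat) \<Rightarrow> bool) \<Rightarrow> bool" where
  "monomial_order ord \<longleftrightarrow>
     (\<forall>s. ord s s) \<and> (\<forall>s t. ord s t \<and> ord t s \<longrightarrow> s = t) \<and>
     (\<forall>s t u. ord s t \<and> ord t u \<longrightarrow> ord s u) \<and> (\<forall>s t. ord s t \<or> ord t s) \<and>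
     (\<forall>t. ord 0 t) \<and> (\<forall>s t u. ord s t \<longrightarrow> ord (s + u) (t + u)) \<and>
     wfP (\<lambda>s t. ord s t \<and> s \<noteq> t)"

definition elimination_order :: "((nat \<Rightarrow>\<^sub>0 nat) \<Rightarrow> (nat \<Rightarrow>\<^sub>0 nat) \<Rightarrow> bool) \<Rightarrow> nat set \<Rightarrow> bool" where
  "elimination_order ord X \<longleftrightarrow> monomial_order ord \<and>
     (\<forall>s t. ord s t \<and> Poly_Mapping.keys t \<inter> X = {} \<longrightarrow> Poly_Mapping.keys s \<inter> X = {})"

definition lead_mon :: "((nat \<Rightarrow>\<^sub>0 nat) \<Rightarrow> (nat \<Rightarrow>\<^sub>0 nat) \<Rightarrow> bool) \<Rightarrow> 'k::zero mpoly \<Rightarrow> nat \<Rightarrow>\<^sub>0 nat" where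
  "lead_mon ord p = (THE m. m \<in> Poly_Mapping.keys p \<and> (\<forall>m'\<in>Poly_Mapping.keys p. ord m' m))"

definition mon_dvd :: "(nat \<Rightarrow>\<^sub>0 nat) \<Rightarrow> (nat \<Rightarrow>\<^sub>0 nat) \<Rightarrow> bool" where
  "mon_dvd s t \<longleftrightarrow> (\<exists>u. t = s + u)"

text \<open>Groebner basis of the ideal generated by F inside the polynomial ring in the variables Vs.\<close>
definition is_groebner_basis ::
  "((nat \<Rightarrow>\<^sub>0 nat) \<Rightarrow> (nat \<Rightarrow>\<^sub>0 nat) \<Rightarrow> bool) \<Rightarrow> nat set \<Rightarrow> 'k::comm_ring_1 mpoly set \<Rightarrow> 'k mpoly set \<Rightarrow> bool" where
  "is_groebner_basis ord Vs Gb F \<longleftrightarrow>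
     finite Gb \<and> (\<forall>g\<in>Gb. mvars g \<subseteq> Vs) \<and> ideal_gen Gb = ideal_gen F \<and>
     (\<forall>p\<in>ideal_gen F. mvars p \<subseteq> Vs \<and> p \<noteq> 0 \<longrightarrow>
        (\<exists>g\<in>Gb. g \<noteq> 0 \<and> mon_dvd (lead_mon ord g) (lead_mon ord p)))"

text \<open>Points of affine d-space are functions nat => k supported in {1..d}.\<close>
definition aff :: "nat \<Rightarrow> (nat \<Rightarrow> 'k::zero) set" where
  "aff d = {a. \<forall>i. i = 0 \<or> d < i \<longrightarrow> a i = 0}"

definition zariski_closed :: "nat \<Rightarrow> (nat \<Rightarrow> 'k::comm_ring_1) set \<Rightarrow> bool" where
  "zariski_closed d C \<longleftrightarrow> (\<exists>P. (\<forall>p\<in>P. mvars p \<subseteq> {1..d}) \<and>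
       C = {a \<in> aff d. \<forall>p\<in>P. mpeval p a = 0})"

definition zariski_closure :: "nat \<Rightarrow> (nat \<Rightarrow> 'k::comm_ring_1) set \<Rightarrow> (nat \<Rightarrow> 'k) set" where
  "zariski_closure d S = \<Inter> {C. zariski_closed d C \<and> S \<subseteq> C}"

definition Ars :: "nat \<Rightarrow> nat \<Rightarrow> (nat \<Rightarrow> 'k::comm_ring_1) set" where
  "Ars r s = {a \<in> aff (r + s). (\<Prod>i=1..r. a i) \<noteq> 0}"

text \<open>Coordinates of an N x N matrix as a point of A^(N*N).\<close>
definition mat_coords :: "nat \<Rightarrow> 'k::zero mat \<Rightarrow> nat \<Rightarrow> 'k" where
  "mat_coords N A = (\<lambda>i. if 1 \<le> i \<and> i \<le> N * N then A $$ ((i - 1) div N, (i - 1) mod N) else 0)"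

definition linear_algebraic_group :: "nat \<Rightarrow> 'k::field mat set \<Rightarrow> bool" where
  "linear_algebraic_group N G \<longleftrightarrow>
     G \<subseteq> carrier_mat N N \<and> (\<forall>A\<in>G. det A \<noteq> 0) \<and>
     1\<^sub>m N \<in> G \<and> (\<forall>A\<in>G. \<forall>B\<in>G. A * B \<in> G) \<and> (\<forall>A\<in>G. \<exists>B\<in>G. A * B = 1\<^sub>m N) \<and>
     (\<exists>C. zariski_closed (N * N) C \<and>
        G = {A \<in> carrier_mat N N. det A \<noteq> 0 \<and> mat_coords N A \<in> C})"

definition zariski_connected_group :: "nat \<Rightarrow> 'k::field mat set \<Rightarrow> bool" where
  "zariski_connected_group N G \<longleftrightarrow>
     (\<forall>C1 C2. zariski_closed (N * N) C1 \<and> zariski_closed (N * N) C2 \<and>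
        mat_coords N ` G \<subseteq> C1 \<union> C2 \<and> mat_coords N ` G \<inter> C1 \<inter> C2 = {} \<longrightarrow>
        mat_coords N ` G \<subseteq> C1 \<or> mat_coords N ` G \<subseteq> C2)"

text \<open>Regular functions on G: restrictions of elements of k[GL_N] = k[entries, 1/det].\<close>
definition regular_on_group :: "nat \<Rightarrow> 'k::field mat set \<Rightarrow> ('k mat \<Rightarrow> 'k) \<Rightarrow> bool" where
  "regular_on_group N G f \<longleftrightarrow> (\<exists>P e. mvars P \<subseteq> {1..N * N} \<and>
      (\<forall>A\<in>G. f A = mpeval P (mat_coords N A) / det A ^ e))"

text \<open>An algebraic G-module structure on k^n, given by its matrix coefficients rho p q (1 <= p,q <= n).\<close>
definition rep_matrix :: "nat \<Rightarrow> (nat \<Rightarrow> nat \<Rightarrow> 'k mat \<Rightarrow> 'k) \<Rightarrow> 'k mat \<Rightarrow> 'k mat" where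
  "rep_matrix n \<rho> g = mat n n (\<lambda>(p, q). \<rho> (Suc p) (Suc q) g)"

definition algebraic_G_module ::
  "nat \<Rightarrow> 'k::field mat set \<Rightarrow> nat \<Rightarrow> (nat \<Rightarrow> nat \<Rightarrow> 'k mat \<Rightarrow> 'k) \<Rightarrow> bool" where
  "algebraic_G_module N G n \<rho> \<longleftrightarrow>
     (\<forall>p\<in>{1..n}. \<forall>q\<in>{1..n}. regular_on_group N G (\<rho> p q)) \<and>
     rep_matrix n \<rho> (1\<^sub>m N) = 1\<^sub>m n \<and>
     (\<forall>A\<in>G. \<forall>B\<in>G. rep_matrix n \<rho> (A * B) = rep_matrix n \<rho> A * rep_matrix n \<rho> B)"

definition act :: "nat \<Rightarrow> (nat \<Rightarrow> nat \<Rightarrow> 'k mat \<Rightarrow> 'k::comm_ring_1) \<Rightarrow> 'k mat \<Rightarrow> (nat \<Rightarrow> 'k) \<Rightarrow> nat \<Rightarrow> 'k" where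
  "act n \<rho> g v = (\<lambda>p. if 1 \<le> p \<and> p \<le> n then (\<Sum>q=1..n. \<rho> p q g * v q) else 0)"

definition orbit_set ::
  "nat \<Rightarrow> (nat \<Rightarrow> nat \<Rightarrow> 'k mat \<Rightarrow> 'k::comm_ring_1) \<Rightarrow> 'k mat set \<Rightarrow> (nat \<Rightarrow> 'k) set \<Rightarrow> (nat \<Rightarrow> 'k) set" where
  "orbit_set n \<rho> G L = {act n \<rho> g v | g v. g \<in> G \<and> v \<in> L}"

text \<open>A morphism A^{r,s} -> G: every matrix entry is a regular function on A^{r,s},
  i.e. a polynomial divided by a power of x_1 ... x_r.\<close>
definition morphism_Ars_to_group ::
  "nat \<Rightarrow> nat \<Rightarrow> nat \<Rightarrow> 'k::field mat set \<Rightarrow> ((nat \<Rightarrow> 'k) \<Rightarrow> 'k mat) \<Rightarrow> bool" where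
  "morphism_Ars_to_group r s N G \<iota> \<longleftrightarrow>
     (\<forall>a\<in>Ars r s. \<iota> a \<in> G) \<and>
     (\<forall>i<N. \<forall>j<N. \<exists>P e. mvars P \<subseteq> {1..r + s} \<and>
        (\<forall>a\<in>Ars r s. \<iota> a $$ (i, j) = mpeval P a / (\<Prod>l=1..r. a l) ^ e))"

definition dominant_Ars_to_group ::
  "nat \<Rightarrow> nat \<Rightarrow> nat \<Rightarrow> 'k::field mat set \<Rightarrow> ((nat \<Rightarrow> 'k) \<Rightarrow> 'k mat) \<Rightarrow> bool" where
  "dominant_Ars_to_group r s N G \<iota> \<longleftrightarrow> morphism_Ars_to_group r s N G \<iota> \<and>
     mat_coords N ` G \<subseteq> zariski_closure (N * N) (mat_coords N ` \<iota> ` Ars r s)"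

definition morphism_aff :: "nat \<Rightarrow> nat \<Rightarrow> ((nat \<Rightarrow> 'k::comm_ring_1) \<Rightarrow> nat \<Rightarrow> 'k) \<Rightarrow> bool" where
  "morphism_aff l n \<tau> \<longleftrightarrow> (\<forall>b\<in>aff l. \<tau> b \<in> aff n) \<and>
     (\<forall>q\<in>{1..n}. \<exists>P. mvars P \<subseteq> {1..l} \<and> (\<forall>b\<in>aff l. \<tau> b q = mpeval P b))"

definition affine_linear_subvariety :: "nat \<Rightarrow> (nat \<Rightarrow> 'k::field) set \<Rightarrow> bool" where
  "affine_linear_subvariety n L \<longleftrightarrow> (\<exists>v0\<in>aff n. \<exists>W. W \<subseteq> aff n \<and> (\<lambda>i. 0) \<in> W \<and>
      (\<forall>u\<in>W. \<forall>w\<in>W. (\<lambda>i. u i + w i) \<in> W) \<and> (\<forall>c. \<forall>w\<in>W. (\<lambda>i. c * w i) \<in> W) \<and>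
      L = (\<lambda>w i. v0 i + w i) ` W)"

text \<open>Variables: t = 0, x_i = i (1 <= i <= r+s), y_j = r+s+j (1 <= j <= l),
  z_p = r+s+l+p (1 <= p <= n).\<close>

definition xpart :: "nat \<Rightarrow> nat \<Rightarrow> (nat \<Rightarrow> 'k::zero) \<Rightarrow> nat \<Rightarrow> 'k" where
  "xpart r s a = (\<lambda>i. if 1 \<le> i \<and> i \<le> r + s then a i else 0)"

definition ypart :: "nat \<Rightarrow> nat \<Rightarrow> nat \<Rightarrow> (nat \<Rightarrow> 'k::zero) \<Rightarrow> nat \<Rightarrow> 'k" where
  "ypart r s l a = (\<lambda>j. if 1 \<le> j \<and> j \<le> l then a (r + s + j) else 0)"

definition Ars_times_aff :: "nat \<Rightarrow> nat \<Rightarrow> nat \<Rightarrow> (nat \<Rightarrow> 'k::comm_ring_1) set" where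
  "Ars_times_aff r s l = {a \<in> aff (r + s + l). (\<Prod>i=1..r. a i) \<noteq> 0}"

text \<open>z-point of v in A^n: the assignment z_p := v_p.\<close>
definition zpoint :: "nat \<Rightarrow> (nat \<Rightarrow> 'k::zero) \<Rightarrow> nat \<Rightarrow> 'k" where
  "zpoint m v = (\<lambda>i. if m < i then v (i - m) else 0)"

end

theory Submission
  imports Defs
begin

definition mon :: "(nat \<Rightarrow>\<^sub>0 nat) \<Rightarrow> (nat \<Rightarrow> 'k::comm_ring_1) \<Rightarrow> 'k" where
  "mon m a = (\<Prod>i\<in>Poly_Mapping.keys m. a i ^ Poly_Mapping.lookup m i)"

lemma mpeval_mon: "mpeval p a = (\<Sum>m\<in>Poly_Mapping.keys p. Poly_Mapping.lookup p m * mon m a)"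
  unfolding mpeval_def mon_def by simp

lemma mon_superset:
  assumes "finite S" "Poly_Mapping.keys m \<subseteq> S"
  shows "mon m a = (\<Prod>i\<in>S. a i ^ Poly_Mapping.lookup m i)"
  unfolding mon_def
  by (rule prod.mono_neutral_left[OF assms(1) assms(2)]) (auto simp: in_keys_iff)

lemma mon_zero[simp]: "mon 0 a = 1"
  unfolding mon_def by simp

lemma mon_add: "mon (m + m') a = mon m a * mon m' a"
proof -
  let ?S = "Poly_Mapping.keys m \<union> Poly_Mapping.keys m' \<union> Poly_Mapping.keys (m + m')"
  have f: "finite ?S" by simp
  have "mon (m + m') a = (\<Prod>i\<in>?S. a i ^ Poly_Mapping.lookup (m + m') i)"
    by (rule mon_superset[OF f]) auto
  also have "\<dots> = (\<Prod>i\<in>?S. a i ^ Poly_Mapping.lookup m i * a i ^ Poly_Mapping.lookup m' i)"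
    by (simp add: lookup_add power_add)
  also have "\<dots> = (\<Prod>i\<in>?S. a i ^ Poly_Mapping.lookup m i) * (\<Prod>i\<in>?S. a i ^ Poly_Mapping.lookup m' i)"
    by (rule prod.distrib)
  also have "\<dots> = mon m a * mon m' a"
    by (subst (1 2) mon_superset[OF f]) auto
  finally show ?thesis .
qed

lemma mpeval_superset:
  assumes "finite K" "Poly_Mapping.keys p \<subseteq> K"
  shows "mpeval p a = (\<Sum>m\<in>K. Poly_Mapping.lookup p m * mon m a)"
  unfolding mpeval_mon
  by (rule sum.mono_neutral_left[OF assms]) (auto simp: in_keys_iff)

lemma mpeval_add: "mpeval (p + q) a = mpeval p a + mpeval q a"
proof -
  let ?K = "Poly_Mapping.keys p \<union> Poly_Mapping.keys q \<union> Poly_Mapping.keys (p + q)"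
  have f: "finite ?K" by simp
  have "mpeval (p + q) a = (\<Sum>m\<in>?K. Poly_Mapping.lookup (p + q) m * mon m a)"
    by (rule mpeval_superset[OF f]) auto
  also have "\<dots> = (\<Sum>m\<in>?K. Poly_Mapping.lookup p m * mon m a) + (\<Sum>m\<in>?K. Poly_Mapping.lookup q m * mon m a)"
    by (simp add: lookup_add distrib_right sum.distrib)
  also have "\<dots> = mpeval p a + mpeval q a"
    by (subst (1 2) mpeval_superset[OF f]) auto
  finally show ?thesis .
qed

lemma mpeval_zero[simp]: "mpeval 0 a = 0"
  unfolding mpeval_def by simp

lemma mpeval_sum: "mpeval (sum f A) a = (\<Sum>x\<in>A. mpeval (f x) a)"
  by (induction A rule: infinite_finite_induct) (auto simp: mpeval_add)

lemma mpeval_single: "mpeval (Poly_Mapping.single m c) a = c * mon m a"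
  unfolding mpeval_mon by auto

lemma pm_expand: "p = (\<Sum>m\<in>Poly_Mapping.keys p. Poly_Mapping.single m (Poly_Mapping.lookup p m))"
proof (rule poly_mapping_eqI)
  fix k
  show "Poly_Mapping.lookup p k = Poly_Mapping.lookup (\<Sum>m\<in>Poly_Mapping.keys p. Poly_Mapping.single m (Poly_Mapping.lookup p m)) k"
    by (cases "k \<in> Poly_Mapping.keys p")
       (auto simp: lookup_sum lookup_single in_keys_iff when_def sum.delta' cong: if_cong)
qed

lemma mpeval_mult: "mpeval (p * q) a = mpeval p a * mpeval q a"
proof -
  have e1: "(\<Sum>m\<in>Poly_Mapping.keys p. Poly_Mapping.single m (Poly_Mapping.lookup p m)) = p"
    by (rule pm_expand[symmetric])
  have e2: "(\<Sum>m\<in>Poly_Mapping.keys q. Poly_Mapping.single m (Poly_Mapping.lookup q m)) = q"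
    by (rule pm_expand[symmetric])
  have "mpeval (p * q) a = mpeval ((\<Sum>m\<in>Poly_Mapping.keys p. Poly_Mapping.single m (Poly_Mapping.lookup p m)) *
       (\<Sum>m\<in>Poly_Mapping.keys q. Poly_Mapping.single m (Poly_Mapping.lookup q m))) a"
    by (simp only: e1 e2)
  also have "\<dots> = (\<Sum>m\<in>Poly_Mapping.keys p. \<Sum>m'\<in>Poly_Mapping.keys q.
       Poly_Mapping.lookup p m * mon m a * (Poly_Mapping.lookup q m' * mon m' a))"
    by (simp add: sum_product mpeval_sum mult_single mpeval_single mon_add mult_ac)
  also have "\<dots> = mpeval p a * mpeval q a"
    by (simp add: mpeval_mon sum_product)
  finally show ?thesis .
qed

definition Const :: "'k::zero \<Rightarrow> 'k mpoly" where
  "Const c = Poly_Mapping.single 0 c"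

lemma mpeval_Const[simp]: "mpeval (Const c) a = c"
  unfolding Const_def by (simp add: mpeval_single)

lemma mpeval_one[simp]: "mpeval 1 a = 1"
  using mpeval_Const[of 1 a] unfolding Const_def by simp

lemma mpeval_uminus[simp]: "mpeval (- p) a = - mpeval p a"
  using mpeval_add[of p "- p" a] by (metis add.right_inverse add.inverse_unique mpeval_zero)

lemma mpeval_diff[simp]: "mpeval (p - q) a = mpeval p a - mpeval q a"
  using mpeval_add[of p "- q" a] by simp

lemma mpeval_prod: "mpeval (prod f A) a = (\<Prod>x\<in>A. mpeval (f x) a)"
  by (induction A rule: infinite_finite_induct) (auto simp: mpeval_mult)

lemma mpeval_power: "mpeval (p ^ e) a = mpeval p a ^ e"
  by (induction e) (auto simp: mpeval_mult)

lemma mpeval_Var[simp]: "mpeval (Var i) a = a i"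
  unfolding Var_def by (simp add: mpeval_single mon_def)

declare mpeval_add[simp] mpeval_mult[simp] mpeval_sum[simp] mpeval_prod[simp] mpeval_power[simp]

lemma mvars_add: "mvars (p + q) \<subseteq> mvars p \<union> mvars q"
  unfolding mvars_def using keys_add[of p q] by blast

lemma keys_add_nat: "Poly_Mapping.keys (m + m' :: nat \<Rightarrow>\<^sub>0 nat) = Poly_Mapping.keys m \<union> Poly_Mapping.keys m'"
  by (auto simp: in_keys_iff lookup_add)

lemma mvars_mult: "mvars (p * q) \<subseteq> mvars p \<union> mvars q"
  unfolding mvars_def using keys_mult[of p q] by (force simp: keys_add_nat)

lemma mvars_uminus[simp]: "mvars (- p) = mvars p"
  unfolding mvars_def by (simp add: keys_minus)

lemma mvars_diff: "mvars (p - q :: 'k::comm_ring_1 mpoly) \<subseteq> mvars p \<union> mvars q"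
  using mvars_add[of p "- q"] by simp

lemma mvars_zero[simp]: "mvars 0 = {}"
  unfolding mvars_def by simp

lemma mvars_one[simp]: "mvars 1 = {}"
  unfolding mvars_def by simp

lemma mvars_Const[simp]: "mvars (Const c) = {}"
  unfolding mvars_def Const_def by simp

lemma mvars_Var[simp]: "mvars (Var i :: 'k::zero_neq_one mpoly) = {i}"
  unfolding mvars_def Var_def by simp

lemma mvars_sum: "mvars (sum f A) \<subseteq> (\<Union>x\<in>A. mvars (f x))"
proof (induction A rule: infinite_finite_induct)
  case (insert x F) then show ?case using mvars_add[of "f x" "sum f F"] by auto
qed auto

lemma mvars_prod: "mvars (prod f A) \<subseteq> (\<Union>x\<in>A. mvars (f x))"
proof (induction A rule: infinite_finite_induct)
  case (insert x F) then show ?case using mvars_mult[of "f x" "prod f F"] by auto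
qed auto

lemma mvars_power: "mvars (p ^ e) \<subseteq> mvars p"
proof (induction e)
  case (Suc e) then show ?case using mvars_mult[of p "p ^ e"] by auto
qed auto

lemma mpeval_cong:
  assumes "\<And>i. i \<in> mvars p \<Longrightarrow> a i = b i"
  shows "mpeval p a = mpeval p b"
proof -
  have "\<And>m i. m \<in> Poly_Mapping.keys p \<Longrightarrow> i \<in> Poly_Mapping.keys m \<Longrightarrow> a i = b i"
    using assms unfolding mvars_def by blast
  then show ?thesis unfolding mpeval_def
    by (intro sum.cong refl arg_cong[where f="(*) _"] prod.cong) auto
qed


lemma alg_closed_infinite:
  assumes "alg_closed TYPE('k::field)"
  shows "infinite (UNIV :: 'k set)"
proof
  assume fin: "finite (UNIV :: 'k set)"
  define q :: "'k poly" where "q = (\<Prod>c\<in>UNIV. [:-c, 1:])"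
  have dq: "degree q = card (UNIV :: 'k set)"
    unfolding q_def by (subst degree_prod_eq_sum_degree) auto
  have "card (UNIV :: 'k set) \<ge> card {0::'k, 1}"
    by (rule card_mono[OF fin]) auto
  then have "card (UNIV :: 'k set) \<ge> 2" by simp
  then have "degree (q + 1) > 0" using dq by (simp add: degree_add_eq_left)
  then obtain x where "poly (q + 1) x = 0"
    using assms unfolding alg_closed_def by blast
  moreover have "poly q x = 0"
    using fin by (auto simp: q_def poly_prod prod_zero_iff intro: bexI[of _ x])
  ultimately show False by simp
qed

lemma update_single_eq: "Poly_Mapping.update d 0 m + Poly_Mapping.single d (Poly_Mapping.lookup m d) = (m :: nat \<Rightarrow>\<^sub>0 nat)"
  by (rule poly_mapping_eqI) (simp add: lookup_update lookup_add lookup_single when_def)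

lemma mon_single: "mon (Poly_Mapping.single d e) a = a d ^ e"
  unfolding mon_def by (cases "e = 0") auto

lemma mvars_finite: "finite (mvars p)"
  unfolding mvars_def by simp

lemma nonzero_eval_aux:
  fixes X :: "nat set"
  assumes inf: "infinite (UNIV :: 'k::field set)" and fin: "finite X"
  shows "\<forall>P :: 'k mpoly. mvars P \<subseteq> X \<longrightarrow> P \<noteq> 0 \<longrightarrow> (\<exists>a. mpeval P a \<noteq> 0)"
  using fin
proof (induction X rule: finite_induct)
  case empty
  show ?case
  proof (intro allI impI)
    fix P :: "'k mpoly" assume "mvars P \<subseteq> {}" "P \<noteq> 0"
    then have k: "Poly_Mapping.keys P \<subseteq> {0}" unfolding mvars_def by auto
    then have "Poly_Mapping.keys P = {0}" using \<open>P \<noteq> 0\<close> by (metis keys_eq_empty subset_singletonD)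
    then have "mpeval P a = Poly_Mapping.lookup P 0" for a by (simp add: mpeval_mon)
    moreover have "Poly_Mapping.lookup P 0 \<noteq> 0" using \<open>Poly_Mapping.keys P = {0}\<close> by (auto simp: in_keys_iff)
    ultimately show "\<exists>a. mpeval P a \<noteq> 0" by auto
  qed
next
  case (insert d X)
  show ?case
  proof (intro allI impI)
    fix P :: "'k mpoly" assume PX: "mvars P \<subseteq> insert d X" and P0: "P \<noteq> 0"
    define S where "S e = {m \<in> Poly_Mapping.keys P. Poly_Mapping.lookup m d = e}" for e
    define Pe where "Pe e = (\<Sum>m\<in>S e. Poly_Mapping.single (Poly_Mapping.update d 0 m) (Poly_Mapping.lookup P m))" for e
    define E where "E = (\<lambda>m. Poly_Mapping.lookup m d) ` Poly_Mapping.keys P"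
    have finE: "finite E" unfolding E_def by simp
    have eval: "mpeval P a = (\<Sum>e\<in>E. mpeval (Pe e) a * a d ^ e)" for a
    proof -
      have "mpeval P a = (\<Sum>e\<in>E. \<Sum>m\<in>S e. Poly_Mapping.lookup P m * mon m a)"
        unfolding mpeval_mon S_def E_def
        by (rule sum.group[symmetric]) auto
      also have "\<dots> = (\<Sum>e\<in>E. \<Sum>m\<in>S e. Poly_Mapping.lookup P m * mon (Poly_Mapping.update d 0 m) a * a d ^ e)"
      proof (intro sum.cong refl)
        fix e m assume "m \<in> S e"
        then have "Poly_Mapping.lookup m d = e" unfolding S_def by auto
        have "mon m a = mon (Poly_Mapping.update d 0 m + Poly_Mapping.single d (Poly_Mapping.lookup m d)) a"
          by (simp only: update_single_eq)
        also have "\<dots> = mon (Poly_Mapping.update d 0 m) a * a d ^ e"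
          by (simp add: mon_add mon_single \<open>Poly_Mapping.lookup m d = e\<close>)
        finally show "Poly_Mapping.lookup P m * mon m a = Poly_Mapping.lookup P m * mon (Poly_Mapping.update d 0 m) a * a d ^ e"
          by simp
      qed
      also have "\<dots> = (\<Sum>e\<in>E. mpeval (Pe e) a * a d ^ e)"
        unfolding Pe_def by (simp add: mpeval_single sum_distrib_right)
      finally show ?thesis .
    qed
    have varsPe: "mvars (Pe e) \<subseteq> X" for e
    proof -
      have "mvars (Pe e) \<subseteq> (\<Union>m\<in>S e. mvars (Poly_Mapping.single (Poly_Mapping.update d 0 m) (Poly_Mapping.lookup P m)))"
        unfolding Pe_def by (rule mvars_sum)
      also have "\<dots> \<subseteq> X"
      proof (clarsimp)
        fix m i assume m: "m \<in> S e" and i: "i \<in> mvars (Poly_Mapping.single (Poly_Mapping.update d 0 m) (Poly_Mapping.lookup P m))"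
        then have "i \<in> Poly_Mapping.keys (Poly_Mapping.update d 0 m)"
          unfolding mvars_def by (auto split: if_splits)
        then have "i \<noteq> d" "i \<in> Poly_Mapping.keys m"
          by (auto simp: in_keys_iff lookup_update split: if_splits)
        moreover have "m \<in> Poly_Mapping.keys P" using m unfolding S_def by auto
        ultimately show "i \<in> X" using PX unfolding mvars_def by auto
      qed
      finally show ?thesis .
    qed
    obtain m0 where m0: "m0 \<in> Poly_Mapping.keys P" using P0 by fastforce
    define e0 where "e0 = Poly_Mapping.lookup m0 d"
    have e0E: "e0 \<in> E" unfolding E_def e0_def using m0 by auto
    have "Poly_Mapping.lookup (Pe e0) (Poly_Mapping.update d 0 m0) = Poly_Mapping.lookup P m0"
    proof -
      have "Poly_Mapping.lookup (Pe e0) (Poly_Mapping.update d 0 m0) =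
            (\<Sum>m\<in>S e0. if m = m0 then Poly_Mapping.lookup P m else 0)"
        unfolding Pe_def lookup_sum
      proof (intro sum.cong refl)
        fix m assume "m \<in> S e0"
        then have md: "Poly_Mapping.lookup m d = e0" unfolding S_def by auto
        have "Poly_Mapping.update d 0 m = Poly_Mapping.update d 0 m0 \<longleftrightarrow> m = m0"
        proof
          assume h: "Poly_Mapping.update d 0 m = Poly_Mapping.update d 0 m0"
          have "m = Poly_Mapping.update d 0 m + Poly_Mapping.single d (Poly_Mapping.lookup m d)"
            by (simp only: update_single_eq)
          also have "\<dots> = Poly_Mapping.update d 0 m0 + Poly_Mapping.single d (Poly_Mapping.lookup m0 d)"
            using h md e0_def by simp
          also have "\<dots> = m0" by (simp only: update_single_eq)
          finally show "m = m0" .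
        qed simp
        then show "Poly_Mapping.lookup (Poly_Mapping.single (Poly_Mapping.update d 0 m) (Poly_Mapping.lookup P m)) (Poly_Mapping.update d 0 m0) =
              (if m = m0 then Poly_Mapping.lookup P m else 0)"
          by (simp add: lookup_single when_def)
      qed
      also have "\<dots> = Poly_Mapping.lookup P m0"
        using m0 by (simp add: S_def e0_def)
      finally show ?thesis .
    qed
    then have "Pe e0 \<noteq> 0" using m0 by (auto simp: in_keys_iff)
    then obtain a' where a': "mpeval (Pe e0) a' \<noteq> 0"
      using insert.IH varsPe by blast
    define pol where "pol = (\<Sum>e\<in>E. monom (mpeval (Pe e) a') e)"
    have "coeff pol e0 = mpeval (Pe e0) a'"
      unfolding pol_def coeff_sum using finE e0E by (simp add: sum.delta)
    then have "pol \<noteq> 0" using a' by auto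
    then have "finite {x. poly pol x = 0}" by (rule poly_roots_finite)
    then obtain x where x: "x \<notin> {x. poly pol x = 0}" using ex_new_if_finite[OF inf] by blast
    have "mpeval P (a'(d := x)) = (\<Sum>e\<in>E. mpeval (Pe e) (a'(d := x)) * x ^ e)"
      by (simp add: eval)
    also have "\<dots> = (\<Sum>e\<in>E. mpeval (Pe e) a' * x ^ e)"
    proof (intro sum.cong refl arg_cong2[where f="(*)"])
      fix e show "mpeval (Pe e) (a'(d := x)) = mpeval (Pe e) a'"
        by (rule mpeval_cong) (use varsPe insert.hyps in auto)
    qed
    also have "\<dots> = poly pol x" unfolding pol_def by (simp add: poly_sum poly_monom)
    finally show "\<exists>a. mpeval P a \<noteq> 0" using x by (metis (mono_tags) mem_Collect_eq)
  qed
qed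

lemma nonzero_eval:
  assumes "infinite (UNIV :: 'k::field set)" "P \<noteq> (0 :: 'k mpoly)"
  shows "\<exists>a. mpeval P a \<noteq> 0"
  using nonzero_eval_aux[OF assms(1) mvars_finite[of P]] assms(2) by blast

definition restr :: "nat \<Rightarrow> (nat \<Rightarrow> 'k::zero) \<Rightarrow> nat \<Rightarrow> 'k" where
  "restr d a = (\<lambda>i. if 1 \<le> i \<and> i \<le> d then a i else 0)"

lemma restr_aff: "restr d a \<in> aff d"
  unfolding restr_def aff_def by auto

lemma mpeval_restr: "mvars P \<subseteq> {1..d} \<Longrightarrow> mpeval P (restr d a) = mpeval P a"
  by (rule mpeval_cong) (auto simp: restr_def)

lemma nonzero_eval_aff:
  assumes "infinite (UNIV :: 'k::field set)" "P \<noteq> (0 :: 'k mpoly)" "mvars P \<subseteq> {1..d}"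
  shows "\<exists>a\<in>aff d. mpeval P a \<noteq> 0"
  using nonzero_eval[OF assms(1,2)] mpeval_restr[OF assms(3)] restr_aff by metis

lemma nonroot_vanish:
  assumes inf: "infinite (UNIV :: 'k::field set)" and Q0: "Q \<noteq> (0 :: 'k mpoly)"
    and QV: "mvars Q \<subseteq> {1..d}" and NV: "mvars N \<subseteq> {1..d}"
    and van: "\<forall>a\<in>aff d. mpeval Q a \<noteq> 0 \<longrightarrow> mpeval N a = 0"
  shows "N = 0"
proof (rule ccontr)
  assume "N \<noteq> 0"
  then have "N * Q \<noteq> 0" using Q0 by simp
  moreover have "mvars (N * Q) \<subseteq> {1..d}" using mvars_mult[of N Q] QV NV by auto
  ultimately obtain a where "a \<in> aff d" "mpeval (N * Q) a \<noteq> 0"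
    using nonzero_eval_aff[OF inf] by blast
  then show False using van by auto
qed


definition pf :: "nat set \<Rightarrow> ((nat \<Rightarrow> 'k::comm_ring_1) \<Rightarrow> 'k) \<Rightarrow> bool" where
  "pf X f \<longleftrightarrow> (\<exists>P. mvars P \<subseteq> X \<and> (\<forall>a. f a = mpeval P a))"

lemma pf_const: "pf X (\<lambda>a. c)"
  unfolding pf_def by (rule exI[of _ "Const c"]) simp

lemma pf_var: "i \<in> X \<Longrightarrow> pf X (\<lambda>a. a i)"
  unfolding pf_def by (rule exI[of _ "Var i"]) simp

lemma pf_mpeval: "mvars P \<subseteq> X \<Longrightarrow> pf X (mpeval P)"
  unfolding pf_def by blast

lemma pf_add: "pf X f \<Longrightarrow> pf X g \<Longrightarrow> pf X (\<lambda>a. f a + g a)"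
  unfolding pf_def
proof (elim exE conjE)
  fix P Q assume "mvars P \<subseteq> X" "\<forall>a. f a = mpeval P a" "mvars Q \<subseteq> X" "\<forall>a. g a = mpeval Q a"
  then show "\<exists>R. mvars R \<subseteq> X \<and> (\<forall>a. f a + g a = mpeval R a)"
    using mvars_add[of P Q] by (intro exI[of _ "P + Q"]) auto
qed

lemma pf_mult: "pf X f \<Longrightarrow> pf X g \<Longrightarrow> pf X (\<lambda>a. f a * g a)"
  unfolding pf_def
proof (elim exE conjE)
  fix P Q assume "mvars P \<subseteq> X" "\<forall>a. f a = mpeval P a" "mvars Q \<subseteq> X" "\<forall>a. g a = mpeval Q a"
  then show "\<exists>R. mvars R \<subseteq> X \<and> (\<forall>a. f a * g a = mpeval R a)"
    using mvars_mult[of P Q] by (intro exI[of _ "P * Q"]) auto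
qed

lemma pf_uminus: "pf X f \<Longrightarrow> pf X (\<lambda>a. - f a)"
  using pf_mult[OF pf_const[of X "-1"]] by simp

lemma pf_diff: "pf X f \<Longrightarrow> pf X g \<Longrightarrow> pf X (\<lambda>a. f a - g a)"
  using pf_add[OF _ pf_uminus] by simp

lemma pf_sum: "finite A \<Longrightarrow> (\<And>x. x \<in> A \<Longrightarrow> pf X (f x)) \<Longrightarrow> pf X (\<lambda>a. \<Sum>x\<in>A. f x a)"
  by (induction A rule: finite_induct) (auto intro: pf_add pf_const)

lemma pf_prod: "finite A \<Longrightarrow> (\<And>x. x \<in> A \<Longrightarrow> pf X (f x)) \<Longrightarrow> pf X (\<lambda>a. \<Prod>x\<in>A. f x a)"
  by (induction A rule: finite_induct) (auto intro: pf_mult pf_const)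

lemma pf_power: "pf X f \<Longrightarrow> pf X (\<lambda>a. f a ^ e)"
  by (induction e) (auto intro: pf_mult pf_const)

lemma pf_compose:
  assumes "mvars Q \<subseteq> Y" "\<And>i. i \<in> Y \<Longrightarrow> pf X (f i)"
  shows "pf X (\<lambda>a. mpeval Q (\<lambda>i. f i a))"
  unfolding mpeval_def
  by (intro pf_sum pf_mult pf_const pf_prod pf_power finite_keys assms(2))
     (use assms(1) in \<open>auto simp: mvars_def\<close>)

lemma pf_cong: "pf X f \<Longrightarrow> (\<And>a. g a = f a) \<Longrightarrow> pf X g"
  unfolding pf_def by auto

lemma pf_mono: "pf X f \<Longrightarrow> X \<subseteq> Y \<Longrightarrow> pf Y f"
  unfolding pf_def by blast

definition rf :: "nat set \<Rightarrow> (nat \<Rightarrow> 'k) set \<Rightarrow> ((nat \<Rightarrow> 'k::field) \<Rightarrow> 'k) \<Rightarrow> bool" where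
  "rf X D f \<longleftrightarrow> (\<exists>u v. pf X u \<and> pf X v \<and> (\<forall>a\<in>D. v a \<noteq> 0 \<and> f a = u a / v a))"

lemma rf_pf: "pf X f \<Longrightarrow> rf X D f"
  unfolding rf_def by (intro exI[of _ f] exI[of _ "\<lambda>a. 1"]) (auto intro: pf_const)

lemma rf_const: "rf X D (\<lambda>a. c)"
  by (rule rf_pf[OF pf_const])

lemma rf_cong: "rf X D f \<Longrightarrow> (\<And>a. a \<in> D \<Longrightarrow> g a = f a) \<Longrightarrow> rf X D g"
  unfolding rf_def by auto

lemma rf_add: "rf X D f \<Longrightarrow> rf X D g \<Longrightarrow> rf X D (\<lambda>a. f a + g a)"
  unfolding rf_def
proof (elim exE conjE)
  fix u1 v1 u2 v2 assume h: "pf X u1" "pf X v1" "\<forall>a\<in>D. v1 a \<noteq> 0 \<and> f a = u1 a / v1 a"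
    "pf X u2" "pf X v2" "\<forall>a\<in>D. v2 a \<noteq> 0 \<and> g a = u2 a / v2 a"
  show "\<exists>u v. pf X u \<and> pf X v \<and> (\<forall>a\<in>D. v a \<noteq> 0 \<and> f a + g a = u a / v a)"
    by (rule exI[of _ "\<lambda>a. u1 a * v2 a + u2 a * v1 a"], rule exI[of _ "\<lambda>a. v1 a * v2 a"])
       (use h in \<open>auto intro!: pf_add pf_mult simp: add_frac_eq\<close>)
qed

lemma rf_mult: "rf X D f \<Longrightarrow> rf X D g \<Longrightarrow> rf X D (\<lambda>a. f a * g a)"
  unfolding rf_def
proof (elim exE conjE)
  fix u1 v1 u2 v2 assume h: "pf X u1" "pf X v1" "\<forall>a\<in>D. v1 a \<noteq> 0 \<and> f a = u1 a / v1 a"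
    "pf X u2" "pf X v2" "\<forall>a\<in>D. v2 a \<noteq> 0 \<and> g a = u2 a / v2 a"
  show "\<exists>u v. pf X u \<and> pf X v \<and> (\<forall>a\<in>D. v a \<noteq> 0 \<and> f a * g a = u a / v a)"
    by (rule exI[of _ "\<lambda>a. u1 a * u2 a"], rule exI[of _ "\<lambda>a. v1 a * v2 a"])
       (use h in \<open>auto intro!: pf_mult\<close>)
qed

lemma rf_divide: "rf X D f \<Longrightarrow> rf X D g \<Longrightarrow> (\<And>a. a \<in> D \<Longrightarrow> g a \<noteq> 0) \<Longrightarrow> rf X D (\<lambda>a. f a / g a)"
  unfolding rf_def
proof (elim exE conjE)
  fix u1 v1 u2 v2 assume h: "pf X u1" "pf X v1" "\<forall>a\<in>D. v1 a \<noteq> 0 \<and> f a = u1 a / v1 a"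
    "pf X u2" "pf X v2" "\<forall>a\<in>D. v2 a \<noteq> 0 \<and> g a = u2 a / v2 a" and g0: "\<And>a. a \<in> D \<Longrightarrow> g a \<noteq> 0"
  show "\<exists>u v. pf X u \<and> pf X v \<and> (\<forall>a\<in>D. v a \<noteq> 0 \<and> f a / g a = u a / v a)"
  proof (rule exI[of _ "\<lambda>a. u1 a * v2 a"], rule exI[of _ "\<lambda>a. v1 a * u2 a"], intro conjI ballI)
    fix a assume a: "a \<in> D"
    have "u2 a \<noteq> 0" using h(6) g0[OF a] a by auto
    then show "v1 a * u2 a \<noteq> 0" using h(3) a by auto
    show "f a / g a = u1 a * v2 a / (v1 a * u2 a)" using h(3,6) a by auto
  qed (use h in \<open>auto intro!: pf_mult\<close>)
qed

lemma rf_uminus: "rf X D f \<Longrightarrow> rf X D (\<lambda>a. - f a)"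
  using rf_mult[OF rf_const[of X D "-1"]] by simp

lemma rf_sum: "finite A \<Longrightarrow> (\<And>x. x \<in> A \<Longrightarrow> rf X D (f x)) \<Longrightarrow> rf X D (\<lambda>a. \<Sum>x\<in>A. f x a)"
  by (induction A rule: finite_induct) (auto intro: rf_add rf_const)

lemma rf_prod: "finite A \<Longrightarrow> (\<And>x. x \<in> A \<Longrightarrow> rf X D (f x)) \<Longrightarrow> rf X D (\<lambda>a. \<Prod>x\<in>A. f x a)"
  by (induction A rule: finite_induct) (auto intro: rf_mult rf_const)

lemma rf_power: "rf X D f \<Longrightarrow> rf X D (\<lambda>a. f a ^ e)"
  by (induction e) (auto intro: rf_mult rf_const)

lemma rf_compose:
  assumes "mvars Q \<subseteq> Y" "\<And>i. i \<in> Y \<Longrightarrow> rf X D (f i)"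
  shows "rf X D (\<lambda>a. mpeval Q (\<lambda>i. f i a))"
  unfolding mpeval_def
  by (intro rf_sum rf_mult rf_const rf_prod rf_power finite_keys assms(2))
     (use assms(1) in \<open>auto simp: mvars_def\<close>)

lemma rf_var: "i \<in> X \<Longrightarrow> rf X D (\<lambda>a. a i)"
  by (rule rf_pf[OF pf_var])

lemma rf_mpeval: "mvars P \<subseteq> X \<Longrightarrow> rf X D (mpeval P)"
  by (rule rf_pf[OF pf_mpeval])

lemma rf_elim:
  assumes "rf X D f"
  obtains N v where "mvars N \<subseteq> X" "\<And>a. a \<in> D \<Longrightarrow> v a \<noteq> 0 \<and> f a = mpeval N a / v a"
  using assms unfolding rf_def pf_def by metis

section \<open>Zariski closure\<close>

lemma closure_subset_closed:
  "zariski_closed d C \<Longrightarrow> S \<subseteq> C \<Longrightarrow> zariski_closure d S \<subseteq> C"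
  unfolding zariski_closure_def by blast

lemma in_closure_vanish:
  assumes "a \<in> zariski_closure d S" "S \<subseteq> aff d" "mvars p \<subseteq> {1..d}" "\<forall>b\<in>S. mpeval p b = 0"
  shows "mpeval p a = 0"
proof -
  let ?C = "{a \<in> aff d. \<forall>q\<in>{p}. mpeval q a = 0}"
  have "zariski_closed d ?C" unfolding zariski_closed_def using assms(3) by blast
  moreover have "S \<subseteq> ?C" using assms(2,4) by auto
  ultimately have "a \<in> ?C" using closure_subset_closed assms(1) by blast
  then show ?thesis by auto
qed

lemma in_closure_aff:
  assumes "a \<in> zariski_closure d S" "S \<subseteq> aff d"
  shows "a \<in> aff d"
proof -
  have "zariski_closed d (aff d)" unfolding zariski_closed_def
    by (rule exI[of _ "{}"]) auto
  then show ?thesis using closure_subset_closed assms by blast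
qed

lemma in_closureI:
  assumes "a \<in> aff d" "\<And>p. mvars p \<subseteq> {1..d} \<Longrightarrow> \<forall>b\<in>S. mpeval p b = 0 \<Longrightarrow> mpeval p a = 0"
  shows "a \<in> zariski_closure d S"
  unfolding zariski_closure_def
proof (rule InterI)
  fix C assume "C \<in> {C. zariski_closed d C \<and> S \<subseteq> C}"
  then obtain P where P: "\<forall>p\<in>P. mvars p \<subseteq> {1..d}" "C = {a \<in> aff d. \<forall>p\<in>P. mpeval p a = 0}" "S \<subseteq> C"
    unfolding zariski_closed_def by blast
  have "\<forall>p\<in>P. mpeval p a = 0"
  proof
    fix p assume "p \<in> P"
    then show "mpeval p a = 0" using assms(2)[of p] P by blast
  qed
  then show "a \<in> C" using assms(1) P(2) by auto
qed


section \<open>Ideals\<close>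

lemma ideal_gen_zero: "0 \<in> ideal_gen F"
  unfolding ideal_gen_def by (rule CollectI, rule exI[of _ "{}"]) auto

lemma ideal_gen_base: "f \<in> F \<Longrightarrow> f \<in> ideal_gen F"
  unfolding ideal_gen_def by (rule CollectI, rule exI[of _ "{f}"], rule exI[of _ "\<lambda>_. 1"]) auto

lemma ideal_gen_add:
  assumes "p \<in> ideal_gen F" "q \<in> ideal_gen F"
  shows "p + q \<in> ideal_gen F"
proof -
  obtain S1 c1 where 1: "finite S1" "S1 \<subseteq> F" "p = (\<Sum>f\<in>S1. c1 f * f)"
    using assms(1) unfolding ideal_gen_def by blast
  obtain S2 c2 where 2: "finite S2" "S2 \<subseteq> F" "q = (\<Sum>f\<in>S2. c2 f * f)"
    using assms(2) unfolding ideal_gen_def by blast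
  define c where "c f = (if f \<in> S1 then c1 f else 0) + (if f \<in> S2 then c2 f else 0)" for f
  have fin: "finite (S1 \<union> S2)" using 1 2 by auto
  have e1: "p = (\<Sum>f\<in>S1 \<union> S2. (if f \<in> S1 then c1 f else 0) * f)"
    unfolding 1(3) by (rule sum.mono_neutral_cong_left[OF fin]) auto
  have e2: "q = (\<Sum>f\<in>S1 \<union> S2. (if f \<in> S2 then c2 f else 0) * f)"
    unfolding 2(3) by (rule sum.mono_neutral_cong_left[OF fin]) auto
  have "p + q = (\<Sum>f\<in>S1 \<union> S2. c f * f)"
    unfolding e1 e2 c_def by (simp add: sum.distrib[symmetric] distrib_right)
  then show ?thesis unfolding ideal_gen_def using fin 1(2) 2(2) by blast
qed

lemma ideal_gen_mult:
  assumes "p \<in> ideal_gen F"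
  shows "r * p \<in> ideal_gen F"
proof -
  obtain S c where 1: "finite S" "S \<subseteq> F" "p = (\<Sum>f\<in>S. c f * f)"
    using assms(1) unfolding ideal_gen_def by blast
  have e: "r * p = (\<Sum>f\<in>S. (r * c f) * f)"
    unfolding 1(3) by (simp add: sum_distrib_left mult.assoc)
  show ?thesis unfolding ideal_gen_def
    by (rule CollectI, intro exI[of _ S] exI[of _ "\<lambda>f. r * c f"]) (use 1 e in auto)
qed

lemma ideal_gen_uminus: "p \<in> ideal_gen F \<Longrightarrow> - p \<in> ideal_gen (F :: 'k::comm_ring_1 mpoly set)"
  using ideal_gen_mult[of p F "-1"] by simp

lemma ideal_gen_diff: "p \<in> ideal_gen F \<Longrightarrow> q \<in> ideal_gen F \<Longrightarrow> p - q \<in> ideal_gen (F :: 'k::comm_ring_1 mpoly set)"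
  using ideal_gen_add[OF _ ideal_gen_uminus, of p F q] by simp

lemma ideal_gen_sum: "finite A \<Longrightarrow> (\<And>x. x \<in> A \<Longrightarrow> f x \<in> ideal_gen F) \<Longrightarrow> sum f A \<in> ideal_gen F"
  by (induction A rule: finite_induct) (auto intro: ideal_gen_add ideal_gen_zero)

lemma ideal_gen_eval:
  assumes "p \<in> ideal_gen F" "\<forall>f\<in>F. mpeval f a = 0"
  shows "mpeval p a = 0"
proof -
  obtain S c where 1: "finite S" "S \<subseteq> F" "p = (\<Sum>f\<in>S. c f * f)"
    using assms(1) unfolding ideal_gen_def by blast
  then show ?thesis using assms(2) by (auto intro!: sum.neutral)
qed

definition cong_I :: "'k::comm_ring_1 mpoly set \<Rightarrow> 'k mpoly \<Rightarrow> 'k mpoly \<Rightarrow> bool" where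
  "cong_I F x y \<longleftrightarrow> x - y \<in> ideal_gen F"

lemma cong_refl: "cong_I F x x"
  unfolding cong_I_def by (simp add: ideal_gen_zero)

lemma cong_sym: "cong_I F x y \<Longrightarrow> cong_I F y x"
  unfolding cong_I_def using ideal_gen_uminus[of "x - y" F] by simp

lemma cong_trans: "cong_I F x y \<Longrightarrow> cong_I F y z \<Longrightarrow> cong_I F x z"
  unfolding cong_I_def using ideal_gen_add[of "x - y" F "y - z"] by simp

lemma cong_add: "cong_I F a b \<Longrightarrow> cong_I F c d \<Longrightarrow> cong_I F (a + c) (b + d)"
proof -
  assume "cong_I F a b" "cong_I F c d"
  then have "(a - b) + (c - d) \<in> ideal_gen F" unfolding cong_I_def by (rule ideal_gen_add)
  moreover have "(a - b) + (c - d) = (a + c) - (b + d)" by simp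
  ultimately show ?thesis unfolding cong_I_def by simp
qed

lemma cong_mult: "cong_I F a b \<Longrightarrow> cong_I F c d \<Longrightarrow> cong_I F (a * c) (b * d)"
proof -
  assume h: "cong_I F a b" "cong_I F c d"
  have "a * (c - d) + d * (a - b) \<in> ideal_gen F"
    using h unfolding cong_I_def by (intro ideal_gen_add ideal_gen_mult)
  moreover have "a * (c - d) + d * (a - b) = a * c - b * d" by (simp add: algebra_simps)
  ultimately show ?thesis unfolding cong_I_def by simp
qed

lemma cong_sum: "(\<And>x. x \<in> A \<Longrightarrow> cong_I F (f x) (g x)) \<Longrightarrow> cong_I F (sum f A) (sum g A)"
  by (induction A rule: infinite_finite_induct) (auto intro: cong_add cong_refl)

lemma cong_prod: "(\<And>x. x \<in> A \<Longrightarrow> cong_I F (f x) (g x)) \<Longrightarrow> cong_I F (prod f A) (prod g A)"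
  by (induction A rule: infinite_finite_induct) (auto intro: cong_mult cong_refl)

lemma cong_power: "cong_I F a b \<Longrightarrow> cong_I F (a ^ e) (b ^ e)"
  by (induction e) (auto intro: cong_mult cong_refl)

lemma cong_ideal: "cong_I F x y \<Longrightarrow> y \<in> ideal_gen F \<Longrightarrow> x \<in> ideal_gen F"
  unfolding cong_I_def using ideal_gen_add[of "x - y" F y] by simp

lemma cong_eval: "cong_I F x y \<Longrightarrow> \<forall>f\<in>F. mpeval f a = 0 \<Longrightarrow> mpeval x a = mpeval y a"
  unfolding cong_I_def using ideal_gen_eval[of "x - y" F a] by simp


section \<open>Substitution\<close>

definition msubst :: "(nat \<Rightarrow> 'k::comm_ring_1 mpoly) \<Rightarrow> 'k mpoly \<Rightarrow> 'k mpoly" where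
  "msubst \<sigma> P = (\<Sum>m\<in>Poly_Mapping.keys P. Const (Poly_Mapping.lookup P m) *
       (\<Prod>i\<in>Poly_Mapping.keys m. \<sigma> i ^ Poly_Mapping.lookup m i))"

lemma mpeval_msubst: "mpeval (msubst \<sigma> P) a = mpeval P (\<lambda>i. mpeval (\<sigma> i) a)"
  unfolding msubst_def by (simp add: mpeval_def[of P])

lemma msubst_induct:
  assumes "Q 0" "\<And>c. Q (Const c)" "\<And>x y. Q x \<Longrightarrow> Q y \<Longrightarrow> Q (x + y)" "\<And>x y. Q x \<Longrightarrow> Q y \<Longrightarrow> Q (x * y)"
    "\<And>i. i \<in> mvars P \<Longrightarrow> Q (\<sigma> i)"
  shows "Q (msubst \<sigma> P)"
proof -
  have one: "Q 1" using assms(2)[of 1] by (simp add: Const_def)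
  have S: "finite A \<Longrightarrow> (\<And>x. x \<in> A \<Longrightarrow> Q (f x)) \<Longrightarrow> Q (sum f A)" for A and f :: "_ \<Rightarrow> _ mpoly"
    by (induction A rule: finite_induct) (auto intro: assms(1,3))
  have Pr: "finite A \<Longrightarrow> (\<And>x. x \<in> A \<Longrightarrow> Q (f x)) \<Longrightarrow> Q (prod f A)" for A and f :: "_ \<Rightarrow> _ mpoly"
    by (induction A rule: finite_induct) (auto intro: one assms(4))
  have Pw: "Q x \<Longrightarrow> Q (x ^ e)" for x e
    by (induction e) (auto intro: one assms(4))
  show ?thesis unfolding msubst_def
    by (intro S Pr Pw assms(4) assms(2) finite_keys assms(5)) (auto simp: mvars_def)
qed

lemma mvars_msubst: "mvars (msubst \<sigma> P) \<subseteq> (\<Union>i\<in>mvars P. mvars (\<sigma> i))"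
  by (rule msubst_induct[where Q = "\<lambda>x. mvars x \<subseteq> (\<Union>i\<in>mvars P. mvars (\<sigma> i))"])
     (use mvars_add mvars_mult in \<open>fastforce+\<close>)

lemma cong_msubst:
  assumes "\<And>i. i \<in> mvars P \<Longrightarrow> cong_I F (\<sigma> i) (\<sigma>' i)"
  shows "cong_I F (msubst \<sigma> P) (msubst \<sigma>' P)"
  unfolding msubst_def
  by (intro cong_sum cong_mult cong_prod cong_power cong_refl assms) (auto simp: mvars_def)

lemma Var_power: "Var i ^ e = Poly_Mapping.single (Poly_Mapping.single i e) (1::'k::comm_ring_1)"
  by (induction e) (auto simp: Var_def mult_single single_add[symmetric])

lemma prod_single: "finite A \<Longrightarrow> (\<Prod>i\<in>A. Poly_Mapping.single (f i) (1::'k::comm_ring_1)) = Poly_Mapping.single (\<Sum>i\<in>A. f i) 1"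
  by (induction A rule: finite_induct) (auto simp: mult_single)

lemma msubst_Var: "msubst Var P = (P :: 'k::comm_ring_1 mpoly)"
proof -
  have "msubst Var P = (\<Sum>m\<in>Poly_Mapping.keys P. Poly_Mapping.single m (Poly_Mapping.lookup P m))"
    unfolding msubst_def
  proof (intro sum.cong refl)
    fix m :: "nat \<Rightarrow>\<^sub>0 nat"
    have "(\<Prod>i\<in>Poly_Mapping.keys m. (Var i :: 'k mpoly) ^ Poly_Mapping.lookup m i) =
          Poly_Mapping.single (\<Sum>i\<in>Poly_Mapping.keys m. Poly_Mapping.single i (Poly_Mapping.lookup m i)) 1"
      by (simp add: Var_power prod_single)
    also have "\<dots> = Poly_Mapping.single m 1" using pm_expand[of m] by simp
    finally show "Const (Poly_Mapping.lookup P m) * (\<Prod>i\<in>Poly_Mapping.keys m. Var i ^ Poly_Mapping.lookup m i) =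
        Poly_Mapping.single m (Poly_Mapping.lookup P m)"
      by (simp add: Const_def mult_single)
  qed
  also have "\<dots> = P" using pm_expand[of P] by simp
  finally show ?thesis .
qed


section \<open>Leading monomials and Groebner reduction\<close>

lemma finite_has_max:
  assumes "finite K" "K \<noteq> {}" "\<forall>s t. ord s t \<or> ord t s" "\<forall>s t u. ord s t \<and> ord t u \<longrightarrow> ord s u"
  shows "\<exists>x\<in>K. \<forall>y\<in>K. ord y x"
  using assms(1,2)
proof (induction K rule: finite_ne_induct)
  case (singleton x)
  have "ord x x" using assms(3) by metis
  then show ?case by simp
next
  case (insert x F)
  then obtain y where y: "y \<in> F" "\<forall>z\<in>F. ord z y" by (elim bexE) simp
  show ?case
  proof (cases "ord x y")
    case True
    then have "\<forall>z\<in>insert x F. ord z y" using y by simp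
    then show ?thesis using y(1) by (intro bexI[of _ y]) simp_all
  next
    case False then have yx: "ord y x" using assms(3) by metis
    have "ord x x" using assms(3) by metis
    moreover have "\<forall>z\<in>F. ord z x"
    proof
      fix z assume "z \<in> F" then have "ord z y" using y by simp
      then show "ord z x" using yx assms(4) by metis
    qed
    ultimately show ?thesis by (intro bexI[of _ x]) simp_all
  qed
qed

lemma mo_D1:
  assumes "monomial_order ord"
  shows "\<forall>s t. ord s t \<and> ord t s \<longrightarrow> s = t"
  using assms unfolding monomial_order_def by (elim conjE) assumption

lemma mo_D2:
  assumes "monomial_order ord"
  shows "\<forall>s t u. ord s t \<and> ord t u \<longrightarrow> ord s u"
  using assms unfolding monomial_order_def by (elim conjE) assumption

lemma mo_D3:
  assumes "monomial_order ord"
  shows "\<forall>s t. ord s t \<or> ord t s"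
  using assms unfolding monomial_order_def by (elim conjE) assumption

lemma mo_D4:
  assumes "monomial_order ord"
  shows "\<forall>s t u. ord s t \<longrightarrow> ord (s + u) (t + u)"
  using assms unfolding monomial_order_def by (elim conjE) assumption

lemma mo_D5:
  assumes "monomial_order ord"
  shows "wfP (\<lambda>s t. ord s t \<and> s \<noteq> t)"
  using assms unfolding monomial_order_def by (elim conjE) assumption

lemmas mo_D = mo_D1 mo_D2 mo_D3 mo_D4 mo_D5

lemma lead_mon_prop:
  assumes mo: "monomial_order ord" and p0: "p \<noteq> 0"
  shows "lead_mon ord p \<in> Poly_Mapping.keys p \<and> (\<forall>m'\<in>Poly_Mapping.keys p. ord m' (lead_mon ord p))"
proof -
  note tot = mo_D(3)[OF mo] and tr = mo_D(2)[OF mo] and anti = mo_D(1)[OF mo]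
  have "Poly_Mapping.keys p \<noteq> {}" using p0 by simp
  from finite_has_max[OF finite_keys this tot tr]
  obtain x where x: "x \<in> Poly_Mapping.keys p" "\<forall>y\<in>Poly_Mapping.keys p. ord y x" by (elim bexE) simp
  have "\<exists>!m. m \<in> Poly_Mapping.keys p \<and> (\<forall>m'\<in>Poly_Mapping.keys p. ord m' m)"
  proof (rule ex1I[of _ x])
    show "x \<in> Poly_Mapping.keys p \<and> (\<forall>m'\<in>Poly_Mapping.keys p. ord m' x)" using x by simp
  next
    fix y assume "y \<in> Poly_Mapping.keys p \<and> (\<forall>m'\<in>Poly_Mapping.keys p. ord m' y)"
    then have "ord x y" "ord y x" using x by auto
    then show "y = x" using anti by metis
  qed
  then show ?thesis unfolding lead_mon_def by (rule theI')
qed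

lemma lookup_single_mult:
  "Poly_Mapping.lookup (Poly_Mapping.single u cf * g) (u + x) = cf * Poly_Mapping.lookup (g :: 'k::comm_ring_1 mpoly) x"
proof -
  have "Poly_Mapping.single u cf * g = Poly_Mapping.single u cf * (\<Sum>mm\<in>Poly_Mapping.keys g. Poly_Mapping.single mm (Poly_Mapping.lookup g mm))"
    using pm_expand[of g] by simp
  also have "\<dots> = (\<Sum>mm\<in>Poly_Mapping.keys g. Poly_Mapping.single (u + mm) (cf * Poly_Mapping.lookup g mm))"
    by (simp add: sum_distrib_left mult_single)
  finally have e: "Poly_Mapping.lookup (Poly_Mapping.single u cf * g) (u + x) =
     (\<Sum>mm\<in>Poly_Mapping.keys g. if mm = x then cf * Poly_Mapping.lookup g mm else 0)"
    by (simp add: lookup_sum lookup_single when_def)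
  show ?thesis unfolding e
    by (cases "x \<in> Poly_Mapping.keys g") (auto simp: sum.delta in_keys_iff)
qed

lemma keys_single_mult:
  "Poly_Mapping.keys (Poly_Mapping.single u cf * (g :: 'k::comm_ring_1 mpoly)) \<subseteq> (\<lambda>x. u + x) ` Poly_Mapping.keys g"
  using keys_mult[of "Poly_Mapping.single u cf" g] by (auto split: if_splits)

lemma groebner_reduce:
  fixes Gb F :: "'k::field mpoly set"
  assumes eo: "elimination_order ord X0"
    and GB: "is_groebner_basis ord Vs Gb F"
    and Z: "Zr \<subseteq> Vs" "Zr \<inter> X0 = {}" "Vs - X0 \<subseteq> Zr"
    and van: "\<forall>q\<in>Gb. mvars q \<subseteq> Zr \<longrightarrow> mpeval q c = 0"
  shows "p \<in> ideal_gen F \<Longrightarrow> mvars p \<subseteq> Zr \<Longrightarrow> mpeval p c = 0"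
proof -
  note eo' = eo[unfolded elimination_order_def]
  note mo = conjunct1[OF eo'] and el = conjunct2[OF eo']
  note wf = mo_D(5)[OF mo] and comp = mo_D(4)[OF mo]
  note GB' = GB[unfolded is_groebner_basis_def]
  note GbV = conjunct1[OF conjunct2[OF GB']] and GbI = conjunct1[OF conjunct2[OF conjunct2[OF GB']]]
    and GBp = conjunct2[OF conjunct2[OF conjunct2[OF GB']]]
  have main: "\<forall>p. lead_mon ord p = t \<longrightarrow> p \<in> ideal_gen F \<longrightarrow> mvars p \<subseteq> Zr \<longrightarrow> mpeval p c = 0" for t
    using wf
  proof (induction t rule: wfp_induct_rule)
    case (less t)
    show ?case
    proof (intro allI impI)
      fix p assume pt: "lead_mon ord p = t" and pI: "p \<in> ideal_gen F" and pZ: "mvars p \<subseteq> Zr"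
      show "mpeval p c = 0"
      proof (cases "p = 0")
        case True then show ?thesis by simp
      next
        case False
        note lp = lead_mon_prop[OF mo False]
        have "mvars p \<subseteq> Vs" using pZ Z(1) by auto
        then have "\<exists>g\<in>Gb. g \<noteq> 0 \<and> mon_dvd (lead_mon ord g) (lead_mon ord p)"
          using GBp pI False by simp
        then obtain g where g: "g \<in> Gb" "g \<noteq> 0" "mon_dvd (lead_mon ord g) t"
          using pt by auto
        obtain u where u: "t = lead_mon ord g + u" using g(3) unfolding mon_dvd_def by blast
        note lg = lead_mon_prop[OF mo g(2)]
        have tkeys: "Poly_Mapping.keys t \<subseteq> Zr" using lp pt pZ unfolding mvars_def by auto
        then have "Poly_Mapping.keys (lead_mon ord g) \<inter> X0 = {}" using u Z(2) keys_add_nat by auto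
        then have gZ: "mvars g \<subseteq> Zr"
        proof -
          assume lgX: "Poly_Mapping.keys (lead_mon ord g) \<inter> X0 = {}"
          have "Poly_Mapping.keys mm \<subseteq> Zr" if mm: "mm \<in> Poly_Mapping.keys g" for mm
          proof -
            have "ord mm (lead_mon ord g)" using lg mm by auto
            then have "Poly_Mapping.keys mm \<inter> X0 = {}" using el lgX by auto
            moreover have "Poly_Mapping.keys mm \<subseteq> Vs" using GbV g(1) mm unfolding mvars_def by auto
            ultimately show ?thesis using Z(3) by auto
          qed
          then show ?thesis unfolding mvars_def by auto
        qed
        then have gc: "mpeval g c = 0" using van g(1) by blast
        define cf where "cf = Poly_Mapping.lookup p t / Poly_Mapping.lookup g (lead_mon ord g)"
        define p' where "p' = p - Poly_Mapping.single u cf * g"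
        have gI: "g \<in> ideal_gen F" using ideal_gen_base[OF g(1)] GbI by simp
        have p'I: "p' \<in> ideal_gen F" unfolding p'_def by (intro ideal_gen_diff pI ideal_gen_mult gI)
        have ukeys: "Poly_Mapping.keys u \<subseteq> Zr" using tkeys u keys_add_nat by auto
        have p'Z: "mvars p' \<subseteq> Zr"
        proof -
          have "mvars (Poly_Mapping.single u cf) \<subseteq> Zr" using ukeys unfolding mvars_def by auto
          then show ?thesis unfolding p'_def
            using mvars_diff[of p "Poly_Mapping.single u cf * g"] mvars_mult[of "Poly_Mapping.single u cf" g] pZ gZ by blast
        qed
        have ev: "mpeval p' c = mpeval p c" unfolding p'_def by (simp add: gc)
        show ?thesis
        proof (cases "p' = 0")
          case True then show ?thesis using ev by simp
        next
          case False
          note lp' = lead_mon_prop[OF mo False]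
          define t' where "t' = lead_mon ord p'"
          have gne: "Poly_Mapping.lookup g (lead_mon ord g) \<noteq> 0" using lg by (simp add: in_keys_iff)
          have "Poly_Mapping.lookup p' t = Poly_Mapping.lookup p t - cf * Poly_Mapping.lookup g (lead_mon ord g)"
            unfolding p'_def lookup_minus using lookup_single_mult[of u cf g "lead_mon ord g"] u
            by (simp add: add.commute)
          also have "\<dots> = 0" unfolding cf_def using gne by simp
          finally have "t \<notin> Poly_Mapping.keys p'" by (simp add: in_keys_iff)
          then have ne: "t' \<noteq> t" using lp' t'_def by auto
          have "t' \<in> Poly_Mapping.keys p \<union> Poly_Mapping.keys (Poly_Mapping.single u cf * g)"
            using lp' t'_def keys_diff[of p "Poly_Mapping.single u cf * g"] unfolding p'_def by auto
          then have "ord t' t"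
          proof
            assume "t' \<in> Poly_Mapping.keys p" then show ?thesis using lp pt by auto
          next
            assume "t' \<in> Poly_Mapping.keys (Poly_Mapping.single u cf * g)"
            then obtain x where x: "x \<in> Poly_Mapping.keys g" "t' = u + x" using keys_single_mult by blast
            then have "ord x (lead_mon ord g)" using lg by auto
            then have "ord (x + u) (lead_mon ord g + u)" using comp by blast
            then show ?thesis using x u by (simp add: add.commute)
          qed
          then have "\<forall>p. lead_mon ord p = t' \<longrightarrow> p \<in> ideal_gen F \<longrightarrow> mvars p \<subseteq> Zr \<longrightarrow> mpeval p c = 0"
            using less.IH[of t'] ne by simp
          then have "mpeval p' c = 0" using t'_def p'I p'Z by simp
          then show ?thesis using ev by simp
        qed
      qed
    qed
  qed
  show "p \<in> ideal_gen F \<Longrightarrow> mvars p \<subseteq> Zr \<Longrightarrow> mpeval p c = 0" using main by blast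
qed


definition Phi :: "nat \<Rightarrow> (nat \<Rightarrow> 'k::field mpoly) \<Rightarrow> (nat \<Rightarrow> 'k mpoly) \<Rightarrow> (nat \<Rightarrow> 'k) \<Rightarrow> nat \<Rightarrow> 'k" where
  "Phi n g h a = (\<lambda>p. if 1 \<le> p \<and> p \<le> n then mpeval (g p) a / mpeval (h p) a else 0)"

definition Fset :: "nat \<Rightarrow> nat \<Rightarrow> (nat \<Rightarrow> 'k::field mpoly) \<Rightarrow> (nat \<Rightarrow> 'k mpoly) \<Rightarrow> 'k mpoly set" where
  "Fset M n g h = (\<lambda>p. h p * Var (M + p) - g p) ` {1..n} \<union> {1 - (\<Prod>p=1..n. h p) * Var 0}"

definition bpt :: "nat \<Rightarrow> nat \<Rightarrow> (nat \<Rightarrow> 'k::field mpoly) \<Rightarrow> (nat \<Rightarrow> 'k mpoly) \<Rightarrow> (nat \<Rightarrow> 'k) \<Rightarrow> nat \<Rightarrow> 'k" where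
  "bpt M n g h a = (\<lambda>i. if i = 0 then 1 / (\<Prod>p=1..n. mpeval (h p) a) else if i \<le> M then a i
      else if i \<le> M + n then Phi n g h a (i - M) else 0)"

lemma bpt_low:
  assumes "mvars R \<subseteq> {1..M}"
  shows "mpeval R (bpt M n g h a) = mpeval R a"
  by (rule mpeval_cong) (use assms in \<open>auto simp: bpt_def\<close>)

lemma bpt_high:
  assumes "mvars q \<subseteq> {M+1..M+n}"
  shows "mpeval q (bpt M n g h a) = mpeval q (zpoint M (Phi n g h a))"
  by (rule mpeval_cong) (use assms in \<open>auto simp: bpt_def zpoint_def Phi_def\<close>)

lemma bpt_VF:
  assumes hv: "\<forall>p\<in>{1..n}. mvars (h p) \<subseteq> {1..M}" and gv: "\<forall>p\<in>{1..n}. mvars (g p) \<subseteq> {1..M}"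
    and hnz: "\<forall>p\<in>{1..n}. mpeval (h p) a \<noteq> 0"
  shows "\<forall>f\<in>Fset M n g h. mpeval f (bpt M n g h a) = 0"
proof
  fix f assume "f \<in> Fset M n g h"
  then consider p where "p \<in> {1..n}" "f = h p * Var (M + p) - g p" | "f = 1 - (\<Prod>p=1..n. h p) * Var 0"
    unfolding Fset_def by blast
  then show "mpeval f (bpt M n g h a) = 0"
  proof cases
    case 1
    have "bpt M n g h a (M + p) = mpeval (g p) a / mpeval (h p) a"
      using 1 by (auto simp: bpt_def Phi_def)
    then show ?thesis using 1 hv gv hnz bpt_low[of "h p" M n g h a] bpt_low[of "g p" M n g h a] by auto
  next
    case 2
    have "mpeval (\<Prod>p=1..n. h p) (bpt M n g h a) = (\<Prod>p=1..n. mpeval (h p) a)"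
      unfolding mpeval_prod by (intro prod.cong refl bpt_low) (use hv in auto)
    moreover have "(\<Prod>p=1..n. mpeval (h p) a) \<noteq> 0" using hnz by simp
    ultimately show ?thesis using 2 by (simp add: bpt_def)
  qed
qed

lemma Phi_van:
  assumes hv: "\<forall>p\<in>{1..n}. mvars (h p) \<subseteq> {1..M}" and gv: "\<forall>p\<in>{1..n}. mvars (g p) \<subseteq> {1..M}"
    and hnz: "\<forall>p\<in>{1..n}. mpeval (h p) a \<noteq> 0"
    and qI: "q \<in> ideal_gen (Fset M n g h)" and qv: "mvars q \<subseteq> {M+1..M+n}"
  shows "mpeval q (zpoint M (Phi n g h a)) = 0"
  using ideal_gen_eval[OF qI bpt_VF[OF hv gv hnz]] bpt_high[OF qv] by simp

lemma prod_Var_nonzero: "(\<Prod>i\<in>A. Var i :: 'k::field mpoly) \<noteq> 0"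
proof
  assume "(\<Prod>i\<in>A. Var i :: 'k mpoly) = 0"
  then have "mpeval (\<Prod>i\<in>A. Var i :: 'k mpoly) (\<lambda>_. 1) = 0" by simp
  then show False by (simp add: mpeval_prod)
qed

lemma key_alg:
  fixes h g :: "nat \<Rightarrow> 'k::field mpoly"
  assumes inf: "infinite (UNIV :: 'k set)"
    and hv: "\<forall>p\<in>{1..n}. mvars (h p) \<subseteq> {1..M} \<and> h p \<noteq> 0" and gv: "\<forall>p\<in>{1..n}. mvars (g p) \<subseteq> {1..M}"
    and qv: "mvars q \<subseteq> {M+1..M+n}"
    and van: "\<forall>a\<in>aff M. (\<forall>p\<in>{1..n}. mpeval (h p) a \<noteq> 0) \<longrightarrow> mpeval q (zpoint M (Phi n g h a)) = 0"
  shows "q \<in> ideal_gen (Fset M n g h)"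
proof -
  let ?F = "Fset M n g h"
  define T :: "'k mpoly" where "T = Var 0"
  define H where "H = (\<Prod>p=1..n. h p)"
  define H' where "H' p = (\<Prod>p'\<in>{1..n} - {p}. h p')" for p
  define Y where "Y p = T * g p * H' p" for p
  define \<sigma> where "\<sigma> i = (if M < i \<and> i \<le> M + n then Y (i - M) else Var i)" for i
  have hv': "\<forall>p\<in>{1..n}. mvars (h p) \<subseteq> {1..M}" using hv by auto
  have HT: "1 - H * T \<in> ideal_gen ?F" unfolding H_def T_def Fset_def by (rule ideal_gen_base) auto
  have congHT: "cong_I ?F (H * T) 1"
    unfolding cong_I_def using ideal_gen_uminus[OF HT] by simp
  have HH': "h p * H' p = H" if "p \<in> {1..n}" for p
    unfolding H_def H'_def using that by (simp add: prod.remove)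
  have cZ: "cong_I ?F (Var (M + p)) (Y p)" if p: "p \<in> {1..n}" for p
  proof -
    have g1: "h p * Var (M + p) - g p \<in> ideal_gen ?F" unfolding Fset_def by (rule ideal_gen_base) (use p in auto)
    have "Var (M + p) * (1 - H * T) + (T * H' p) * (h p * Var (M + p) - g p) \<in> ideal_gen ?F"
      by (intro ideal_gen_add ideal_gen_mult HT g1)
    moreover have "Var (M + p) * (1 - H * T) + (T * H' p) * (h p * Var (M + p) - g p) = Var (M + p) - Y p"
      unfolding Y_def using HH'[OF p] by (simp add: algebra_simps)
    ultimately show ?thesis unfolding cong_I_def by simp
  qed
  define Q where "Q = msubst \<sigma> q"
  have cqQ: "cong_I ?F q Q"
  proof -
    have "cong_I ?F (msubst Var q) (msubst \<sigma> q)"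
    proof (rule cong_msubst)
      fix i assume "i \<in> mvars q"
      then have i: "M < i" "i \<le> M + n" using qv by auto
      then have "i - M \<in> {1..n}" by auto
      from cZ[OF this] show "cong_I ?F (Var i) (\<sigma> i)" unfolding \<sigma>_def using i by simp
    qed
    then show ?thesis unfolding Q_def msubst_Var .
  qed
  define E where "E x = (\<exists>D R. mvars R \<subseteq> {1..M} \<and> cong_I ?F (H ^ D * x) R)" for x
  have mvH: "mvars H \<subseteq> {1..M}" unfolding H_def using mvars_prod[of h "{1..n}"] hv' by blast
  have mvHp: "mvars (H ^ D) \<subseteq> {1..M}" for D using mvars_power[of H D] mvH by blast
  have Elow: "E x" if "mvars x \<subseteq> {1..M}" for x
    unfolding E_def by (rule exI[of _ "0::nat"], rule exI[of _ x]) (use that in \<open>simp add: cong_refl\<close>)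
  have E0: "E 0" by (rule Elow) simp
  have Eadd: "E (x + y)" if h1: "E x" and h2: "E y" for x y
  proof -
    obtain D1 R1 where 1: "mvars R1 \<subseteq> {1..M}" "cong_I ?F (H ^ D1 * x) R1" using h1 unfolding E_def by blast
    obtain D2 R2 where 2: "mvars R2 \<subseteq> {1..M}" "cong_I ?F (H ^ D2 * y) R2" using h2 unfolding E_def by blast
    have "cong_I ?F (H ^ D2 * (H ^ D1 * x) + H ^ D1 * (H ^ D2 * y)) (H ^ D2 * R1 + H ^ D1 * R2)"
      by (intro cong_add cong_mult cong_refl 1(2) 2(2))
    moreover have "H ^ D2 * (H ^ D1 * x) + H ^ D1 * (H ^ D2 * y) = H ^ (D1 + D2) * (x + y)"
      by (simp add: algebra_simps power_add)
    moreover have "mvars (H ^ D2 * R1 + H ^ D1 * R2) \<subseteq> {1..M}"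
      using mvars_add[of "H ^ D2 * R1" "H ^ D1 * R2"] mvars_mult[of "H ^ D2" R1] mvars_mult[of "H ^ D1" R2]
        mvHp[of D1] mvHp[of D2] 1(1) 2(1) by blast
    ultimately show ?thesis unfolding E_def by metis
  qed
  have Emult: "E (x * y)" if h1: "E x" and h2: "E y" for x y
  proof -
    obtain D1 R1 where 1: "mvars R1 \<subseteq> {1..M}" "cong_I ?F (H ^ D1 * x) R1" using h1 unfolding E_def by blast
    obtain D2 R2 where 2: "mvars R2 \<subseteq> {1..M}" "cong_I ?F (H ^ D2 * y) R2" using h2 unfolding E_def by blast
    have "cong_I ?F ((H ^ D1 * x) * (H ^ D2 * y)) (R1 * R2)"
      by (intro cong_mult 1(2) 2(2))
    moreover have "(H ^ D1 * x) * (H ^ D2 * y) = H ^ (D1 + D2) * (x * y)"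
      by (simp add: algebra_simps power_add)
    moreover have "mvars (R1 * R2) \<subseteq> {1..M}"
      using mvars_mult[of R1 R2] 1(1) 2(1) by blast
    ultimately show ?thesis unfolding E_def by metis
  qed
  have ET: "E T"
    unfolding E_def by (intro exI[of _ 1] exI[of _ 1]) (use congHT in simp)
  have Eprod: "finite A \<Longrightarrow> (\<And>x. x \<in> A \<Longrightarrow> E (f x)) \<Longrightarrow> E (prod f A)" for A f
    by (induction A rule: finite_induct) (auto intro: Emult Elow)
  have EY: "E (Y p)" if "p \<in> {1..n}" for p
    unfolding Y_def H'_def
    by (intro Emult ET Elow Eprod) (use gv hv' that in auto)
  have EQ: "E Q" unfolding Q_def
  proof (rule msubst_induct[where Q = E])
    fix i assume "i \<in> mvars q"
    then have i: "M < i" "i \<le> M + n" using qv by auto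
    then have "i - M \<in> {1..n}" by auto
    then show "E (\<sigma> i)" unfolding \<sigma>_def using EY[of "i - M"] i by simp
  qed (auto intro: E0 Elow Eadd Emult)
  then obtain D R where R: "mvars R \<subseteq> {1..M}" "cong_I ?F (H ^ D * Q) R" unfolding E_def by blast
  have Hne: "H \<noteq> 0" unfolding H_def using hv by simp
  have "R = 0"
  proof (rule nonroot_vanish[OF inf Hne mvH R(1)], intro ballI impI)
    fix a assume a: "a \<in> aff M" "mpeval H a \<noteq> 0"
    then have hnz: "\<forall>p\<in>{1..n}. mpeval (h p) a \<noteq> 0" unfolding H_def by (simp add: mpeval_prod)
    note VF = bpt_VF[OF hv' gv hnz]
    let ?b = "bpt M n g h a"
    have "mpeval (H ^ D * Q) ?b = mpeval R ?b" by (rule cong_eval[OF R(2) VF])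
    moreover have "mpeval R ?b = mpeval R a" using bpt_low[OF R(1)] .
    moreover have "mpeval Q ?b = mpeval q ?b" using cong_eval[OF cqQ VF] by simp
    moreover have "mpeval q ?b = 0" using bpt_high[OF qv] van a(1) hnz by simp
    ultimately show "mpeval R a = 0" by simp
  qed
  then have HQ: "H ^ D * Q \<in> ideal_gen ?F" using R(2) unfolding cong_I_def by simp
  have "cong_I ?F ((H * T) ^ D * Q) (1 ^ D * Q)"
    by (intro cong_mult cong_power congHT cong_refl)
  then have c0: "cong_I ?F ((H * T) ^ D * Q) Q" by simp
  have eq: "(H * T) ^ D * Q = T ^ D * (H ^ D * Q)" by (simp add: power_mult_distrib mult_ac)
  have c1: "cong_I ?F Q (T ^ D * (H ^ D * Q))" using cong_sym[OF c0] eq by simp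
  have "Q \<in> ideal_gen ?F" by (rule cong_ideal[OF c1 ideal_gen_mult[OF HQ]])
  then show ?thesis by (rule cong_ideal[OF cqQ])
qed

lemma dens_U:
  fixes h g :: "nat \<Rightarrow> 'k::field mpoly"
  assumes inf: "infinite (UNIV :: 'k set)"
    and hv: "\<forall>p\<in>{1..n}. mvars (h p) \<subseteq> {1..M} \<and> h p \<noteq> 0" and gv: "\<forall>p\<in>{1..n}. mvars (g p) \<subseteq> {1..M}"
    and rM: "r \<le> M"
    and Pv: "mvars P \<subseteq> {1..n}"
    and vanW: "\<forall>a\<in>aff M. (\<Prod>i=1..r. a i) \<noteq> 0 \<longrightarrow> (\<forall>p\<in>{1..n}. mpeval (h p) a \<noteq> 0) \<longrightarrow> mpeval P (Phi n g h a) = 0"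
    and a: "a \<in> aff M" "\<forall>p\<in>{1..n}. mpeval (h p) a \<noteq> 0"
  shows "mpeval P (Phi n g h a) = 0"
proof -
  let ?U = "{a \<in> aff M. \<forall>p\<in>{1..n}. mpeval (h p) a \<noteq> 0}"
  have "rf {1..M} ?U (\<lambda>a. mpeval P (\<lambda>p. Phi n g h a p))"
  proof (rule rf_compose[OF Pv])
    fix p assume p: "p \<in> {1..n}"
    have "mvars (g p) \<subseteq> {1..M}" "mvars (h p) \<subseteq> {1..M}" using p hv gv by auto
    then have "rf {1..M} ?U (\<lambda>a. mpeval (g p) a / mpeval (h p) a)"
      by (intro rf_divide rf_mpeval) (use p in auto)
    then show "rf {1..M} ?U (\<lambda>a. Phi n g h a p)"
      by (rule rf_cong) (use p in \<open>auto simp: Phi_def\<close>)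
  qed
  then obtain N v where Nv: "mvars N \<subseteq> {1..M}" "\<And>a. a \<in> ?U \<Longrightarrow> v a \<noteq> 0 \<and> mpeval P (Phi n g h a) = mpeval N a / v a"
    by (rule rf_elim) blast
  define Q where "Q = (\<Prod>i=1..r. Var i) * (\<Prod>p=1..n. h p)"
  have Q1: "(\<Prod>i=1..r. Var i :: 'k mpoly) \<noteq> 0" by (rule prod_Var_nonzero)
  have Q2: "(\<Prod>p=1..n. h p) \<noteq> 0" using hv by simp
  have Q0: "Q \<noteq> 0" unfolding Q_def using Q1 Q2 by (metis mult_eq_0_iff)
  have QV: "mvars Q \<subseteq> {1..M}"
  proof -
    have "mvars (\<Prod>i=1..r. Var i :: 'k mpoly) \<subseteq> {1..M}" using mvars_prod[of Var "{1..r}"] rM by auto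
    moreover have "mvars (\<Prod>p=1..n. h p) \<subseteq> {1..M}" using mvars_prod[of h "{1..n}"] hv by blast
    ultimately show ?thesis unfolding Q_def using mvars_mult by blast
  qed
  have "N = 0"
  proof (rule nonroot_vanish[OF inf Q0 QV Nv(1)], intro ballI impI)
    fix b assume b: "b \<in> aff M" "mpeval Q b \<noteq> 0"
    then have 1: "(\<Prod>i=1..r. b i) \<noteq> 0" "\<forall>p\<in>{1..n}. mpeval (h p) b \<noteq> 0"
      unfolding Q_def by (auto simp: mpeval_prod)
    then have "mpeval P (Phi n g h b) = 0" using vanW b(1) by blast
    moreover have "v b \<noteq> 0 \<and> mpeval P (Phi n g h b) = mpeval N b / v b" using Nv(2) b(1) 1(2) by blast
    ultimately show "mpeval N b = 0" by auto
  qed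
  then show ?thesis using Nv(2)[of a] a by simp
qed


lemma coords_idx:
  assumes "i \<in> {1..N * (N::nat)}"
  shows "(i - 1) div N < N" "(i - 1) mod N < N"
proof -
  have N0: "N > 0" using assms by (cases N) auto
  have "i - 1 < N * N" using assms by auto
  then show "(i - 1) div N < N" by (simp add: less_mult_imp_div_less)
  show "(i - 1) mod N < N" using N0 by simp
qed

lemma mat_coords_aff: "mat_coords N A \<in> aff (N * N)"
  unfolding mat_coords_def aff_def by auto

definition Mc :: "nat \<Rightarrow> (nat \<Rightarrow> 'k) \<Rightarrow> 'k mat" where
  "Mc N c = mat N N (\<lambda>(i, j). c (i * N + j + 1))"

lemma idx_bound:
  assumes "i < N" "j < (N::nat)"
  shows "i * N + j + 1 \<in> {1..N * N}"
proof -
  have "i * N + j < i * N + N" using assms by simp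
  also have "\<dots> = (i + 1) * N" by simp
  also have "\<dots> \<le> N * N" using assms(1) by (intro mult_le_mono1) simp
  finally show ?thesis by simp
qed

lemma Mc_coords:
  assumes "A \<in> carrier_mat N N"
  shows "Mc N (mat_coords N A) = (A :: 'k::zero mat)"
proof (rule eq_matI)
  show "dim_row (Mc N (mat_coords N A)) = dim_row A" "dim_col (Mc N (mat_coords N A)) = dim_col A"
    using assms unfolding Mc_def by auto
  fix i j assume "i < dim_row A" "j < dim_col A"
  then have ij: "i < N" "j < N" using assms by auto
  have d: "(i * N + j) div N = i" "(i * N + j) mod N = j" using ij by auto
  show "Mc N (mat_coords N A) $$ (i, j) = A $$ (i, j)"
    unfolding Mc_def mat_coords_def using ij idx_bound[OF ij] d by auto
qed

lemma Mc_carrier: "Mc N c \<in> carrier_mat N N"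
  unfolding Mc_def by simp

lemma det_Mc_pf: "pf {1..N * N} (\<lambda>c. det (Mc N c :: 'k::comm_ring_1 mat))"
proof -
  have "pf {1..N * N} (\<lambda>c. \<Sum>p\<in>{p. p permutes {0..<N}}. signof p * (\<Prod>i=0..<N. (c :: nat \<Rightarrow> 'k) (i * N + p i + 1)))"
  proof (intro pf_sum pf_mult pf_const pf_prod finite_permutations finite_atLeastLessThan)
    fix p i assume "p \<in> {p. p permutes {0..<N}}" "i \<in> {0..<N}"
    then have "p i < N" "i < N" using permutes_in_image[of p "{0..<N}" i] by auto
    then show "pf {1..N * N} (\<lambda>c. c (i * N + p i + 1))" by (intro pf_var idx_bound)
  qed
  then show ?thesis
  proof (rule pf_cong)
    fix c :: "nat \<Rightarrow> 'k"
    show "det (Mc N c) = (\<Sum>p\<in>{p. p permutes {0..<N}}. signof p * (\<Prod>i=0..<N. c (i * N + p i + 1)))"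
      unfolding det_def'[OF Mc_carrier]
    proof (intro sum.cong refl arg_cong2[where f = "(*)"] prod.cong)
      fix p i assume "p \<in> {p. p permutes {0..<N}}" "i \<in> {0..<N}"
      then have "p i < N" "i < N" using permutes_in_image[of p "{0..<N}" i] by auto
      then show "Mc N c $$ (i, p i) = c (i * N + p i + 1)" unfolding Mc_def by simp
    qed
  qed
qed

lemma act_in_aff: "act n \<rho> A w \<in> aff n"
  unfolding act_def aff_def by auto


lemma orb_a:
  fixes G :: "'k::field mat set" and h g :: "nat \<Rightarrow> 'k mpoly"
  assumes inf: "infinite (UNIV :: 'k set)"
    and G_sub: "G \<subseteq> carrier_mat N N" and G_det: "\<forall>A\<in>G. det A \<noteq> 0"
    and reg: "\<forall>p\<in>{1..n}. \<forall>q\<in>{1..n}. regular_on_group N G (\<rho> p q)"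
    and iota: "morphism_Ars_to_group r s N G \<iota>"
    and tau: "morphism_aff l n \<tau>"
    and hv: "\<forall>p\<in>{1..n}. mvars (h p) \<subseteq> {1..r} \<and> h p \<noteq> 0"
    and gv: "\<forall>p\<in>{1..n}. mvars (g p) \<subseteq> {1..r + s + l}"
    and f_eq: "\<forall>p\<in>{1..n}. \<forall>a\<in>Ars_times_aff r s l.
                 mpeval (h p) a * (\<Sum>q=1..n. \<rho> p q (\<iota> (xpart r s a)) * \<tau> (ypart r s l a) q)
                   = mpeval (g p) a"
    and Pv: "mvars P \<subseteq> {1..n}"
    and vanW: "\<forall>a\<in>aff (r + s + l). (\<Prod>i=1..r. a i) \<noteq> 0 \<longrightarrow> (\<forall>p\<in>{1..n}. mpeval (h p) a \<noteq> 0) \<longrightarrow> mpeval P (Phi n g h a) = 0"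
  shows "\<forall>a\<in>Ars_times_aff r s l. mpeval P (act n \<rho> (\<iota> (xpart r s a)) (\<tau> (ypart r s l a))) = 0"
proof -
  define M where "M = r + s + l"
  define X where "X = {1..M}"
  define D :: "(nat \<Rightarrow> 'k) set" where "D = Ars_times_aff r s l"
  have iotaG: "\<forall>a\<in>Ars r s. \<iota> a \<in> G"
    and iotaE: "\<forall>i<N. \<forall>j<N. \<exists>P e. mvars P \<subseteq> {1..r + s} \<and>
        (\<forall>a\<in>Ars r s. \<iota> a $$ (i, j) = mpeval P a / (\<Prod>l=1..r. a l) ^ e)"
    using iota unfolding morphism_Ars_to_group_def by blast+
  have xA: "xpart r s a \<in> Ars r s" if "a \<in> D" for a
  proof -
    have "(\<Prod>i=1..r. xpart r s a i) = (\<Prod>i=1..r. a i)"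
      by (intro prod.cong refl) (auto simp: xpart_def)
    then show ?thesis using that unfolding D_def Ars_times_aff_def Ars_def xpart_def aff_def by auto
  qed
  have D_prod: "(\<Prod>i=1..r. a i) \<noteq> 0" if "a \<in> D" for a
    using that unfolding D_def Ars_times_aff_def by auto
  have xG: "\<iota> (xpart r s a) \<in> G" if "a \<in> D" for a using iotaG xA[OF that] by blast
  have xC: "\<iota> (xpart r s a) \<in> carrier_mat N N" if "a \<in> D" for a using xG[OF that] G_sub by blast
  have ent: "rf X D (\<lambda>a. \<iota> (xpart r s a) $$ (i, j))" if ij: "i < N" "j < N" for i j
  proof -
    obtain Pij e where Pij: "mvars Pij \<subseteq> {1..r + s}"
      "\<forall>x\<in>Ars r s. \<iota> x $$ (i, j) = mpeval Pij x / (\<Prod>l=1..r. x l) ^ e"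
      using iotaE ij by blast
    have "rf X D (\<lambda>a. mpeval Pij a / (\<Prod>l=1..r. a l) ^ e)"
      by (intro rf_divide rf_mpeval rf_power rf_prod rf_var finite_atLeastAtMost)
         (use Pij(1) D_prod in \<open>auto simp: X_def M_def\<close>)
    then show ?thesis
    proof (rule rf_cong)
      fix a assume a: "a \<in> D"
      have "mpeval Pij (xpart r s a) = mpeval Pij a"
        by (rule mpeval_cong) (use Pij(1) in \<open>auto simp: xpart_def\<close>)
      moreover have "(\<Prod>l=1..r. xpart r s a l) = (\<Prod>l=1..r. a l)"
        by (intro prod.cong refl) (auto simp: xpart_def)
      ultimately show "\<iota> (xpart r s a) $$ (i, j) = mpeval Pij a / (\<Prod>l=1..r. a l) ^ e"
        using Pij(2) xA[OF a] by simp
    qed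
  qed
  have crd: "rf X D (\<lambda>a. mat_coords N (\<iota> (xpart r s a)) i)" if i: "i \<in> {1..N * N}" for i
    using ent[OF coords_idx[OF i]] by (rule rf_cong) (use i in \<open>auto simp: mat_coords_def\<close>)
  have detr: "rf X D (\<lambda>a. det (\<iota> (xpart r s a)))"
  proof -
    have "rf X D (\<lambda>a. \<Sum>p\<in>{p. p permutes {0..<N}}. signof p * (\<Prod>i=0..<N. \<iota> (xpart r s a) $$ (i, p i)))"
    proof (intro rf_sum rf_mult rf_const rf_prod finite_permutations finite_atLeastLessThan)
      fix p i assume "p \<in> {p. p permutes {0..<N}}" "i \<in> {0..<N}"
      then have "p i < N" "i < N" using permutes_in_image[of p "{0..<N}" i] by auto
      then show "rf X D (\<lambda>a. \<iota> (xpart r s a) $$ (i, p i))" by (rule ent[rotated])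
    qed
    then show ?thesis by (rule rf_cong) (use xC in \<open>simp add: det_def'\<close>)
  qed
  have rho: "rf X D (\<lambda>a. \<rho> p q (\<iota> (xpart r s a)))" if pq: "p \<in> {1..n}" "q \<in> {1..n}" for p q
  proof -
    obtain Q e where Q: "mvars Q \<subseteq> {1..N * N}" "\<forall>A\<in>G. \<rho> p q A = mpeval Q (mat_coords N A) / det A ^ e"
      using reg pq unfolding regular_on_group_def by blast
    have "rf X D (\<lambda>a. mpeval Q (\<lambda>i. mat_coords N (\<iota> (xpart r s a)) i) / det (\<iota> (xpart r s a)) ^ e)"
      by (intro rf_divide rf_compose[OF Q(1)] crd rf_power detr) (use G_det xG in auto)
    then show ?thesis by (rule rf_cong) (use Q(2) xG in auto)
  qed
  have tauq: "rf X D (\<lambda>a. \<tau> (ypart r s l a) q)" if q: "q \<in> {1..n}" for q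
  proof -
    obtain Pq where Pq: "mvars Pq \<subseteq> {1..l}" "\<forall>b\<in>aff l. \<tau> b q = mpeval Pq b"
      using tau q unfolding morphism_aff_def by blast
    have "pf X (\<lambda>a. mpeval Pq (\<lambda>j. a (r + s + j)))"
      by (intro pf_compose[OF Pq(1)] pf_var) (auto simp: X_def M_def)
    then have "pf X (\<lambda>a. \<tau> (ypart r s l a) q)"
    proof (rule pf_cong)
      fix a :: "nat \<Rightarrow> 'k"
      have "ypart r s l a \<in> aff l" unfolding ypart_def aff_def by auto
      then have "\<tau> (ypart r s l a) q = mpeval Pq (ypart r s l a)" using Pq(2) by blast
      also have "\<dots> = mpeval Pq (\<lambda>j. a (r + s + j))"
        by (rule mpeval_cong) (use Pq(1) in \<open>auto simp: ypart_def\<close>)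
      finally show "\<tau> (ypart r s l a) q = mpeval Pq (\<lambda>j. a (r + s + j))" .
    qed
    then show ?thesis by (rule rf_pf)
  qed
  have F: "rf X D (\<lambda>a. mpeval P (\<lambda>p. act n \<rho> (\<iota> (xpart r s a)) (\<tau> (ypart r s l a)) p))"
  proof (rule rf_compose[OF Pv])
    fix p assume p: "p \<in> {1..n}"
    have "rf X D (\<lambda>a. \<Sum>q=1..n. \<rho> p q (\<iota> (xpart r s a)) * \<tau> (ypart r s l a) q)"
      by (intro rf_sum rf_mult rho tauq finite_atLeastAtMost p) auto
    then show "rf X D (\<lambda>a. act n \<rho> (\<iota> (xpart r s a)) (\<tau> (ypart r s l a)) p)"
      by (rule rf_cong) (use p in \<open>simp add: act_def\<close>)
  qed
  then obtain N' v where Nv: "mvars N' \<subseteq> X"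
    "\<And>a. a \<in> D \<Longrightarrow> v a \<noteq> 0 \<and> mpeval P (act n \<rho> (\<iota> (xpart r s a)) (\<tau> (ypart r s l a))) = mpeval N' a / v a"
    by (rule rf_elim) blast
  define Q where "Q = (\<Prod>i=1..r. Var i) * (\<Prod>p=1..n. h p)"
  have Q1: "(\<Prod>i=1..r. Var i :: 'k mpoly) \<noteq> 0" by (rule prod_Var_nonzero)
  have Q2: "(\<Prod>p=1..n. h p) \<noteq> 0" using hv by simp
  have Q0: "Q \<noteq> 0" unfolding Q_def using Q1 Q2 by (metis mult_eq_0_iff)
  have QV: "mvars Q \<subseteq> {1..M}"
  proof -
    have "mvars (\<Prod>i=1..r. Var i :: 'k mpoly) \<subseteq> {1..M}" using mvars_prod[of Var "{1..r}"] by (auto simp: M_def)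
    moreover have "mvars (\<Prod>p=1..n. h p) \<subseteq> {1..M}" using mvars_prod[of h "{1..n}"] hv by (fastforce simp: M_def)
    ultimately show ?thesis unfolding Q_def using mvars_mult by blast
  qed
  have "N' = 0"
  proof (rule nonroot_vanish[OF inf Q0 QV], use Nv(1) in \<open>simp add: X_def\<close>, intro ballI impI)
    fix b assume b: "b \<in> aff M" "mpeval Q b \<noteq> 0"
    then have 1: "(\<Prod>i=1..r. b i) \<noteq> 0" "\<forall>p\<in>{1..n}. mpeval (h p) b \<noteq> 0"
      unfolding Q_def by (auto simp: mpeval_prod)
    have bD: "b \<in> D" using b(1) 1(1) unfolding D_def Ars_times_aff_def M_def by auto
    have "act n \<rho> (\<iota> (xpart r s b)) (\<tau> (ypart r s l b)) = Phi n g h b"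
    proof
      fix p show "act n \<rho> (\<iota> (xpart r s b)) (\<tau> (ypart r s l b)) p = Phi n g h b p"
      proof (cases "p \<in> {1..n}")
        case True
        then have "mpeval (h p) b * (\<Sum>q=1..n. \<rho> p q (\<iota> (xpart r s b)) * \<tau> (ypart r s l b) q) = mpeval (g p) b"
          using f_eq bD unfolding D_def by blast
        then show ?thesis using True 1(2) by (auto simp: act_def Phi_def field_simps)
      next
        case False then show ?thesis by (auto simp: act_def Phi_def)
      qed
    qed
    then have "mpeval P (act n \<rho> (\<iota> (xpart r s b)) (\<tau> (ypart r s l b))) = 0"
      using vanW b(1) 1 unfolding M_def by simp
    then show "mpeval N' b = 0" using Nv(2)[OF bD] by auto
  qed
  then show ?thesis using Nv(2) unfolding D_def by simp
qed


lemma orb_b: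
  fixes G :: "'k::field mat set"
  assumes G_sub: "G \<subseteq> carrier_mat N N" and G_det: "\<forall>A\<in>G. det A \<noteq> 0"
    and reg: "\<forall>p\<in>{1..n}. \<forall>q\<in>{1..n}. regular_on_group N G (\<rho> p q)"
    and iotaG: "\<forall>x\<in>Ars r s. \<iota> x \<in> G"
    and dom: "mat_coords N ` G \<subseteq> zariski_closure (N * N) (mat_coords N ` \<iota> ` Ars r s)"
    and Pv: "mvars P \<subseteq> {1..n}"
    and va: "\<forall>x\<in>Ars r s. mpeval P (act n \<rho> (\<iota> x) w0) = 0"
  shows "\<forall>A\<in>G. mpeval P (act n \<rho> A w0) = 0"
proof
  fix A assume AG: "A \<in> G"
  define X where "X = {1..N * N}"
  define D where "D = mat_coords N ` G"
  have McD0: "Mc N c \<in> G \<and> mat_coords N (Mc N c) = c" if "c \<in> D" for c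
  proof -
    from that obtain B where B: "B \<in> G" "c = mat_coords N B" unfolding D_def by blast
    have "B \<in> carrier_mat N N" using B(1) G_sub by blast
    then have "Mc N c = B" using B(2) Mc_coords by simp
    then show ?thesis using B by simp
  qed
  have McD: "Mc N c \<in> G" "mat_coords N (Mc N c) = c" if "c \<in> D" for c
    using McD0[OF that] by simp_all
  have rho: "rf X D (\<lambda>c. \<rho> p q (Mc N c))" if pq: "p \<in> {1..n}" "q \<in> {1..n}" for p q
  proof -
    obtain Q e where Q: "mvars Q \<subseteq> {1..N * N}" "\<forall>A\<in>G. \<rho> p q A = mpeval Q (mat_coords N A) / det A ^ e"
      using reg pq unfolding regular_on_group_def by blast
    have dpf: "pf X (\<lambda>c. det (Mc N c :: 'k mat))" unfolding X_def by (rule det_Mc_pf)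
    have "rf X D (\<lambda>c. mpeval Q c / det (Mc N c) ^ e)"
      by (intro rf_divide rf_mpeval rf_power rf_pf dpf)
         (use Q(1) G_det McD(1) in \<open>auto simp: X_def\<close>)
    then show ?thesis
    proof (rule rf_cong)
      fix c assume c: "c \<in> D"
      show "\<rho> p q (Mc N c) = mpeval Q c / det (Mc N c) ^ e"
        using Q(2) McD[OF c] by simp
    qed
  qed
  have F: "rf X D (\<lambda>c. mpeval P (\<lambda>p. act n \<rho> (Mc N c) w0 p))"
  proof (rule rf_compose[OF Pv])
    fix p assume p: "p \<in> {1..n}"
    have "rf X D (\<lambda>c. \<Sum>q=1..n. \<rho> p q (Mc N c) * w0 q)"
      by (intro rf_sum rf_mult rho rf_const finite_atLeastAtMost p) auto
    then show "rf X D (\<lambda>c. act n \<rho> (Mc N c) w0 p)"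
      by (rule rf_cong) (use p in \<open>simp add: act_def\<close>)
  qed
  then obtain N' v where Nv: "mvars N' \<subseteq> X"
    "\<And>c. c \<in> D \<Longrightarrow> v c \<noteq> 0 \<and> mpeval P (act n \<rho> (Mc N c) w0) = mpeval N' c / v c"
    by (rule rf_elim) blast
  have S_aff: "mat_coords N ` \<iota> ` Ars r s \<subseteq> aff (N * N)" using mat_coords_aff by blast
  have vanS: "\<forall>b\<in>mat_coords N ` \<iota> ` Ars r s. mpeval N' b = 0"
  proof
    fix b assume "b \<in> mat_coords N ` \<iota> ` Ars r s"
    then obtain x where x: "x \<in> Ars r s" "b = mat_coords N (\<iota> x)" by blast
    then have bD: "b \<in> D" unfolding D_def using iotaG by blast
    have "\<iota> x \<in> carrier_mat N N" using x(1) iotaG G_sub by blast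
    then have "Mc N b = \<iota> x" using x(2) Mc_coords by simp
    then have "mpeval P (act n \<rho> (Mc N b) w0) = 0" using va x(1) by simp
    then show "mpeval N' b = 0" using Nv(2)[OF bD] by auto
  qed
  have cA: "mat_coords N A \<in> zariski_closure (N * N) (mat_coords N ` \<iota> ` Ars r s)" using dom AG by blast
  have "mpeval N' (mat_coords N A) = 0"
    by (rule in_closure_vanish[OF cA S_aff]) (use Nv(1) vanS in \<open>auto simp: X_def\<close>)
  moreover have "mat_coords N A \<in> D" unfolding D_def using AG by blast
  moreover have "Mc N (mat_coords N A) = A" using AG G_sub by (intro Mc_coords) blast
  ultimately show "mpeval P (act n \<rho> A w0) = 0" using Nv(2)[of "mat_coords N A"] by auto
qed

lemma orb_c:
  fixes A :: "'k::field mat"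
  assumes Pv: "mvars P \<subseteq> {1..n}"
    and vt: "\<forall>y\<in>aff l. mpeval P (act n \<rho> A (\<tau> y)) = 0"
    and tau_aff: "\<forall>b\<in>aff l. \<tau> b \<in> aff n"
    and L_cl: "L \<subseteq> zariski_closure n (\<tau> ` aff l)"
  shows "\<forall>w\<in>L. mpeval P (act n \<rho> A w) = 0"
proof
  fix w assume wL: "w \<in> L"
  have "pf {1..n} (\<lambda>w. mpeval P (\<lambda>p. act n \<rho> A w p))"
  proof (rule pf_compose[OF Pv])
    fix p assume p: "p \<in> {1..n}"
    have "pf {1..n} (\<lambda>w. \<Sum>q=1..n. \<rho> p q A * w q)"
      by (intro pf_sum pf_mult pf_const pf_var finite_atLeastAtMost) auto
    then show "pf {1..n} (\<lambda>w. act n \<rho> A w p)"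
      by (rule pf_cong) (use p in \<open>simp add: act_def\<close>)
  qed
  then obtain N' where N': "mvars N' \<subseteq> {1..n}" "\<forall>w. mpeval P (act n \<rho> A w) = mpeval N' w"
    unfolding pf_def by auto
  have "mpeval N' w = 0"
    by (rule in_closure_vanish[of w n "\<tau> ` aff l"]) (use wL L_cl tau_aff N' vt in auto)
  then show "mpeval P (act n \<rho> A w) = 0" using N' by simp
qed

definition join :: "nat \<Rightarrow> nat \<Rightarrow> nat \<Rightarrow> (nat \<Rightarrow> 'k::zero) \<Rightarrow> (nat \<Rightarrow> 'k) \<Rightarrow> nat \<Rightarrow> 'k" where
  "join r s l x y = (\<lambda>i. if 1 \<le> i \<and> i \<le> r + s then x i else if r + s < i \<and> i \<le> r + s + l then y (i - (r + s)) else 0)"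

lemma join_props:
  assumes x: "x \<in> Ars r s" and y: "y \<in> aff l"
  shows "join r s l x y \<in> Ars_times_aff r s l" "xpart r s (join r s l x y) = x" "ypart r s l (join r s l x y) = y"
proof -
  have xa: "x \<in> aff (r + s)" "(\<Prod>i=1..r. x i) \<noteq> 0" using x unfolding Ars_def by auto
  have "(\<Prod>i=1..r. join r s l x y i) = (\<Prod>i=1..r. x i)"
    by (intro prod.cong refl) (auto simp: join_def)
  then show "join r s l x y \<in> Ars_times_aff r s l"
    using xa unfolding Ars_times_aff_def aff_def join_def by auto
  show "xpart r s (join r s l x y) = x"
  proof (rule ext)
    fix i show "xpart r s (join r s l x y) i = x i"
      using xa(1) unfolding xpart_def join_def aff_def by (cases "i = 0") auto
  qed
  show "ypart r s l (join r s l x y) = y"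
  proof (rule ext)
    fix i show "ypart r s l (join r s l x y) i = y i"
      using y unfolding ypart_def join_def aff_def by (cases "i = 0") auto
  qed
qed

lemma xpart_Ars:
  assumes "a \<in> Ars_times_aff r s l"
  shows "xpart r s a \<in> Ars r s"
proof -
  have "(\<Prod>i=1..r. xpart r s a i) = (\<Prod>i=1..r. a i)"
    by (intro prod.cong refl) (auto simp: xpart_def)
  then show ?thesis using assms unfolding Ars_times_aff_def Ars_def xpart_def aff_def by auto
qed

lemma ypart_aff: "ypart r s l a \<in> aff l"
  unfolding ypart_def aff_def by auto

lemma phi_act:
  assumes f_eq: "\<forall>p\<in>{1..n}. \<forall>a\<in>Ars_times_aff r s l.
                 mpeval (h p) a * (\<Sum>q=1..n. \<rho> p q (\<iota> (xpart r s a)) * \<tau> (ypart r s l a) q)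
                   = mpeval (g p) a"
    and a: "a \<in> Ars_times_aff r s l" "\<forall>p\<in>{1..n}. mpeval (h p) a \<noteq> (0::'k::field)"
  shows "act n \<rho> (\<iota> (xpart r s a)) (\<tau> (ypart r s l a)) = Phi n g h a"
proof
  fix p show "act n \<rho> (\<iota> (xpart r s a)) (\<tau> (ypart r s l a)) p = Phi n g h a p"
  proof (cases "p \<in> {1..n}")
    case True
    then have "mpeval (h p) a * (\<Sum>q=1..n. \<rho> p q (\<iota> (xpart r s a)) * \<tau> (ypart r s l a) q) = mpeval (g p) a"
      using f_eq a by blast
    then show ?thesis using True a(2) by (auto simp: act_def Phi_def field_simps)
  next
    case False then show ?thesis by (auto simp: act_def Phi_def)
  qed
qed


theorem theorem4:
  fixes N n r s l :: nat
    and G :: "'k::field mat set"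
    and \<rho> :: "nat \<Rightarrow> nat \<Rightarrow> 'k mat \<Rightarrow> 'k"
    and \<iota> :: "(nat \<Rightarrow> 'k) \<Rightarrow> 'k mat"
    and L :: "(nat \<Rightarrow> 'k) set"
    and \<tau> :: "(nat \<Rightarrow> 'k) \<Rightarrow> nat \<Rightarrow> 'k"
    and g h :: "nat \<Rightarrow> 'k mpoly"
    and ord :: "(nat \<Rightarrow>\<^sub>0 nat) \<Rightarrow> (nat \<Rightarrow>\<^sub>0 nat) \<Rightarrow> bool"
    and Gb :: "'k mpoly set"
  assumes k_closed: "alg_closed TYPE('k)"
    and G_group: "linear_algebraic_group N G"
    and G_conn: "zariski_connected_group N G"
    and V_module: "algebraic_G_module N G n \<rho>"
    and iota: "dominant_Ars_to_group r s N G \<iota>"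
    and L_lin: "affine_linear_subvariety n L"
    and tau: "morphism_aff l n \<tau>"
    and tau_img: "\<tau> ` aff l \<subseteq> L" "L \<subseteq> zariski_closure n (\<tau> ` aff l)"
    and g_vars: "\<forall>p\<in>{1..n}. mvars (g p) \<subseteq> {1..r + s + l}"
    and h_vars: "\<forall>p\<in>{1..n}. mvars (h p) \<subseteq> {1..r} \<and> h p \<noteq> 0"
    and f_eq: "\<forall>p\<in>{1..n}. \<forall>a\<in>Ars_times_aff r s l.
                 mpeval (h p) a * (\<Sum>q=1..n. \<rho> p q (\<iota> (xpart r s a)) * \<tau> (ypart r s l a) q)
                   = mpeval (g p) a"
    and ord_elim: "elimination_order ord {0..r + s + l}"
    and GB: "is_groebner_basis ord {0..r + s + l + n} Gb
               ((\<lambda>p. h p * Var (r + s + l + p) - g p) ` {1..n}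
                \<union> {1 - (\<Prod>p=1..n. h p) * Var 0})"
  shows "zariski_closure n (orbit_set n \<rho> G L) =
         {v \<in> aff n. \<forall>q\<in>{q \<in> Gb. mvars q \<subseteq> {r + s + l + 1..r + s + l + n}}.
                       mpeval q (zpoint (r + s + l) v) = 0}"
proof -
  define M where "M = r + s + l"
  have inf: "infinite (UNIV :: 'k set)" by (rule alg_closed_infinite[OF k_closed])
  note Gg = G_group[unfolded linear_algebraic_group_def]
  have G_sub: "G \<subseteq> carrier_mat N N" by (rule conjunct1[OF Gg])
  have G_det: "\<forall>A\<in>G. det A \<noteq> 0" by (rule conjunct1[OF conjunct2[OF Gg]])
  have reg: "\<forall>p\<in>{1..n}. \<forall>q\<in>{1..n}. regular_on_group N G (\<rho> p q)"
    by (rule conjunct1[OF V_module[unfolded algebraic_G_module_def]])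
  note io = iota[unfolded dominant_Ars_to_group_def]
  have imorph: "morphism_Ars_to_group r s N G \<iota>" by (rule conjunct1[OF io])
  have dom: "mat_coords N ` G \<subseteq> zariski_closure (N * N) (mat_coords N ` \<iota> ` Ars r s)"
    by (rule conjunct2[OF io])
  have iotaG: "\<forall>x\<in>Ars r s. \<iota> x \<in> G"
    by (rule conjunct1[OF imorph[unfolded morphism_Ars_to_group_def]])
  have tau_aff: "\<forall>b\<in>aff l. \<tau> b \<in> aff n"
    by (rule conjunct1[OF tau[unfolded morphism_aff_def]])
  have hv': "\<forall>p\<in>{1..n}. mvars (h p) \<subseteq> {1..M} \<and> h p \<noteq> 0" using h_vars unfolding M_def by fastforce
  have hv'': "\<forall>p\<in>{1..n}. mvars (h p) \<subseteq> {1..M}" using hv' by blast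
  have gv': "\<forall>p\<in>{1..n}. mvars (g p) \<subseteq> {1..M}" using g_vars unfolding M_def by blast
  have GB': "is_groebner_basis ord {0..M + n} Gb (Fset M n g h)"
    using GB unfolding Fset_def M_def .
  have eo: "elimination_order ord {0..M}" using ord_elim unfolding M_def .
  have GbI: "ideal_gen Gb = ideal_gen (Fset M n g h)"
    using GB' unfolding is_groebner_basis_def by blast
  let ?O = "orbit_set n \<rho> G L"
  have O_aff: "?O \<subseteq> aff n" unfolding orbit_set_def using act_in_aff by blast
  have PO: "\<forall>w\<in>?O. mpeval P w = 0"
    if Pv: "mvars P \<subseteq> {1..n}" and PU: "\<forall>a\<in>aff M. (\<forall>p\<in>{1..n}. mpeval (h p) a \<noteq> 0) \<longrightarrow> mpeval P (Phi n g h a) = 0"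
    for P
  proof -
    have vanW: "\<forall>a\<in>aff (r + s + l). (\<Prod>i=1..r. a i) \<noteq> 0 \<longrightarrow> (\<forall>p\<in>{1..n}. mpeval (h p) a \<noteq> 0) \<longrightarrow> mpeval P (Phi n g h a) = 0"
      using PU unfolding M_def by blast
    have A1: "\<forall>a\<in>Ars_times_aff r s l. mpeval P (act n \<rho> (\<iota> (xpart r s a)) (\<tau> (ypart r s l a))) = 0"
      by (rule orb_a[OF inf G_sub G_det reg imorph tau h_vars g_vars f_eq Pv vanW])
    have A2: "\<forall>x\<in>Ars r s. mpeval P (act n \<rho> (\<iota> x) (\<tau> y)) = 0" if y: "y \<in> aff l" for y :: "nat \<Rightarrow> 'k"
    proof
      fix x :: "nat \<Rightarrow> 'k" assume x: "x \<in> Ars r s"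
      note jp = join_props[OF x y]
      show "mpeval P (act n \<rho> (\<iota> x) (\<tau> y)) = 0" using A1 jp by metis
    qed
    have A3: "\<forall>A\<in>G. mpeval P (act n \<rho> A (\<tau> y)) = 0" if y: "y \<in> aff l" for y :: "nat \<Rightarrow> 'k"
      by (rule orb_b[OF G_sub G_det reg iotaG dom Pv A2[OF y]])
    have A4: "\<forall>w\<in>L. mpeval P (act n \<rho> A w) = 0" if A: "A \<in> G" for A
      by (rule orb_c[OF Pv _ tau_aff tau_img(2)]) (use A3 A in blast)
    show ?thesis unfolding orbit_set_def using A4 by blast
  qed
  show ?thesis
  proof (intro equalityI subsetI)
    fix v assume v: "v \<in> zariski_closure n ?O"
    have vaff: "v \<in> aff n" by (rule in_closure_aff[OF v O_aff])
    have "mpeval q (zpoint (r + s + l) v) = 0"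
      if q: "q \<in> Gb" "mvars q \<subseteq> {r + s + l + 1..r + s + l + n}" for q
    proof -
      have qv: "mvars q \<subseteq> {M + 1..M + n}" using q(2) unfolding M_def .
      define P where "P = msubst (\<lambda>i. Var (i - M)) q"
      have Pv: "mvars P \<subseteq> {1..n}"
      proof -
        have "mvars P \<subseteq> (\<Union>i\<in>mvars q. mvars (Var (i - M) :: 'k mpoly))"
          unfolding P_def by (rule mvars_msubst)
        also have "\<dots> \<subseteq> {1..n}"
        proof (rule UN_least)
          fix i assume "i \<in> mvars q" then have "i \<in> {M+1..M+n}" using qv by blast
          then show "mvars (Var (i - M) :: 'k mpoly) \<subseteq> {1..n}" by auto
        qed
        finally show ?thesis .
      qed
      have Peval: "mpeval P w = mpeval q (zpoint M w)" for w
        unfolding P_def mpeval_msubst by (rule mpeval_cong) (use qv in \<open>auto simp: zpoint_def\<close>)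
      have qI: "q \<in> ideal_gen (Fset M n g h)" using ideal_gen_base[OF q(1)] GbI by simp
      have "\<forall>w\<in>?O. mpeval P w = 0"
      proof (rule PO[OF Pv], intro ballI impI)
        fix a assume "a \<in> aff M" "\<forall>p\<in>{1..n}. mpeval (h p) a \<noteq> 0"
        then show "mpeval P (Phi n g h a) = 0"
          using Phi_van[OF hv'' gv' _ qI qv] Peval by simp
      qed
      then have "mpeval P v = 0" by (intro in_closure_vanish[OF v O_aff Pv]) 
      then show ?thesis using Peval unfolding M_def by simp
    qed
    then show "v \<in> {v \<in> aff n. \<forall>q\<in>{q \<in> Gb. mvars q \<subseteq> {r + s + l + 1..r + s + l + n}}.
                       mpeval q (zpoint (r + s + l) v) = 0}" using vaff by blast
  next
    fix v assume v: "v \<in> {v \<in> aff n. \<forall>q\<in>{q \<in> Gb. mvars q \<subseteq> {r + s + l + 1..r + s + l + n}}.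
                       mpeval q (zpoint (r + s + l) v) = 0}"
    have vaff: "v \<in> aff n" and vq: "\<forall>q\<in>Gb. mvars q \<subseteq> {M + 1..M + n} \<longrightarrow> mpeval q (zpoint M v) = 0"
      using v unfolding M_def by auto
    show "v \<in> zariski_closure n ?O"
    proof (rule in_closureI[OF vaff])
      fix P assume Pv: "mvars P \<subseteq> {1..n}" and PO': "\<forall>b\<in>?O. mpeval P b = 0"
      have vanW: "\<forall>a\<in>aff M. (\<Prod>i=1..r. a i) \<noteq> 0 \<longrightarrow> (\<forall>p\<in>{1..n}. mpeval (h p) a \<noteq> 0) \<longrightarrow> mpeval P (Phi n g h a) = 0"
      proof (intro ballI impI)
        fix a assume a: "a \<in> aff M" "(\<Prod>i=1..r. a i) \<noteq> 0" "\<forall>p\<in>{1..n}. mpeval (h p) a \<noteq> 0"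
        have aD: "a \<in> Ars_times_aff r s l" using a unfolding Ars_times_aff_def M_def by auto
        have "Phi n g h a = act n \<rho> (\<iota> (xpart r s a)) (\<tau> (ypart r s l a))"
          using phi_act[OF f_eq aD a(3)] by simp
        moreover have "\<iota> (xpart r s a) \<in> G" using iotaG xpart_Ars[OF aD] by blast
        moreover have "\<tau> (ypart r s l a) \<in> L" using tau_img(1) ypart_aff by blast
        ultimately have "Phi n g h a \<in> ?O" unfolding orbit_set_def by blast
        then show "mpeval P (Phi n g h a) = 0" using PO' by blast
      qed
      have rM: "r \<le> M" unfolding M_def by simp
      have PU: "\<forall>a\<in>aff M. (\<forall>p\<in>{1..n}. mpeval (h p) a \<noteq> 0) \<longrightarrow> mpeval P (Phi n g h a) = 0"
        using dens_U[OF inf hv' gv' rM Pv vanW] by blast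
      define q where "q = msubst (\<lambda>i. Var (M + i)) P"
      have qv: "mvars q \<subseteq> {M + 1..M + n}"
      proof -
        have "mvars q \<subseteq> (\<Union>i\<in>mvars P. mvars (Var (M + i) :: 'k mpoly))"
          unfolding q_def by (rule mvars_msubst)
        also have "\<dots> \<subseteq> {M + 1..M + n}" using Pv by auto
        finally show ?thesis .
      qed
      have qeval: "mpeval q (zpoint M w) = mpeval P w" for w
        unfolding q_def mpeval_msubst by (rule mpeval_cong) (use Pv in \<open>auto simp: zpoint_def\<close>)
      have qI: "q \<in> ideal_gen (Fset M n g h)"
        by (rule key_alg[OF inf hv' gv' qv]) (use PU qeval in simp)
      have "mpeval q (zpoint M v) = 0"
        by (rule groebner_reduce[OF eo GB' _ _ _ _ qI qv]) (use vq in auto)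
      then show "mpeval P v = 0" using qeval by simp
    qed
  qed
qed


end
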